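(* Let $n\ge 2$. The completely isolated subsemigroups of $\mathcal{PI}^{\ast}_n$ are exactly $\mathcal{PI}^{\ast}_n$, $\mathcal{S}_n$ and $\mathcal{PI}^{\ast}_n\setminus\mathcal{S}_n$.
   Context: Let $X=\{1,\dots,n\}$, $X'=\{1',\dots,n'\}$. $\mathcal{PI}^{\ast}_n$ is the set of partitions of $X\cup X'$ each of whose blocks is a singleton (point) or a generalised line (a set meeting both $X$ and $X'$), with product $\star$: with $X''$ a third copy of $X$, regard $\alpha$ as a partition of $X\cup X''$ and $\beta$ as a partition of $X''\cup X'$, let $\sim$ be the equivalence on $X\cup X''\cup X'$ generated by the blocks of both; $\alpha\star\beta$ is the partition of $X\cup X'$ in which distinct $u,v$ are in one block iff $u\sim v$ and the $\sim$-class of $u$ contains no singleton block of $\alpha$ or $\beta$. $\mathcal{S}_n$ is its group of units: elements all of whose blocks are $\{x,\pi(x)'\}$ for a permutation $\pi$. A subsemigroup $T$ of a semigroup $S$ is completely isolated if for all $a,b\in S$, $ab\in T$ implies $a\in T$ or $b\in T$. *)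

theory Defs
  imports Main
begin

text \<open>Points of X \<union> X': Inl i stands for i, Inr i stands for i'.\<close>
type_synonym pt = "nat + nat"

definition carrierX :: "nat \<Rightarrow> pt set" where
  "carrierX n = Inl ` {1..n} \<union> Inr ` {1..n}"

definition is_partition :: "'a set \<Rightarrow> 'a set set \<Rightarrow> bool" where
  "is_partition U P \<longleftrightarrow> (\<forall>A\<in>P. A \<noteq> {}) \<and> (\<forall>A\<in>P. \<forall>B\<in>P. A \<noteq> B \<longrightarrow> A \<inter> B = {}) \<and> \<Union>P = U"

definition PIstar :: "nat \<Rightarrow> pt set set set" where
  "PIstar n = {P. is_partition (carrierX n) P \<and>
     (\<forall>A\<in>P. (\<exists>x. A = {x}) \<or> (A \<inter> range Inl \<noteq> {} \<and> A \<inter> range Inr \<noteq> {}))}"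

definition Sn :: "nat \<Rightarrow> pt set set set" where
  "Sn n = {P. \<exists>\<pi>. bij_betw \<pi> {1..n} {1..n} \<and> P = (\<lambda>x. {Inl x, Inr (\<pi> x)}) ` {1..n}}"

text \<open>Three copies X, X'', X' for the product.\<close>
datatype tri = Tp nat | Md nat | Bt nat

fun liftTop :: "pt \<Rightarrow> tri" where
  "liftTop (Inl i) = Tp i" | "liftTop (Inr i) = Md i"
fun liftBot :: "pt \<Rightarrow> tri" where
  "liftBot (Inl i) = Md i" | "liftBot (Inr i) = Bt i"
fun outer :: "pt \<Rightarrow> tri" where
  "outer (Inl i) = Tp i" | "outer (Inr i) = Bt i"

definition allBlocks :: "pt set set \<Rightarrow> pt set set \<Rightarrow> tri set set" where
  "allBlocks \<alpha> \<beta> = (image liftTop ` \<alpha>) \<union> (image liftBot ` \<beta>)"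

definition simrel :: "pt set set \<Rightarrow> pt set set \<Rightarrow> (tri \<times> tri) set" where
  "simrel \<alpha> \<beta> = {(u, v). \<exists>A\<in>allBlocks \<alpha> \<beta>. u \<in> A \<and> v \<in> A}\<^sup>*"

definition badpt :: "pt set set \<Rightarrow> pt set set \<Rightarrow> pt \<Rightarrow> bool" where
  "badpt \<alpha> \<beta> u \<longleftrightarrow> (\<exists>A\<in>allBlocks \<alpha> \<beta>. (\<exists>x. A = {x}) \<and> (\<forall>p\<in>A. (outer u, p) \<in> simrel \<alpha> \<beta>))"

definition star :: "nat \<Rightarrow> pt set set \<Rightarrow> pt set set \<Rightarrow> pt set set" where
  "star n \<alpha> \<beta> = (\<lambda>u. if badpt \<alpha> \<beta> u then {u}
       else {v \<in> carrierX n. (outer u, outer v) \<in> simrel \<alpha> \<beta>}) ` carrierX n"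

definition completely_isolated :: "'a set \<Rightarrow> ('a \<Rightarrow> 'a \<Rightarrow> 'a) \<Rightarrow> 'a set \<Rightarrow> bool" where
  "completely_isolated S f T \<longleftrightarrow>
     T \<noteq> {} \<and> T \<subseteq> S \<and> (\<forall>a\<in>T. \<forall>b\<in>T. f a b \<in> T) \<and>
     (\<forall>a\<in>S. \<forall>b\<in>S. f a b \<in> T \<longrightarrow> a \<in> T \<or> b \<in> T)"

end

theory Submission
  imports Defs "HOL-Combinatorics.Permutations"
begin


definition brel :: "pt set set \<Rightarrow> pt set set \<Rightarrow> (tri \<times> tri) set" where
  "brel \<alpha> \<beta> = {(u, v). \<exists>A\<in>allBlocks \<alpha> \<beta>. u \<in> A \<and> v \<in> A}"

lemma simrel_brel: "simrel \<alpha> \<beta> = (brel \<alpha> \<beta>)\<^sup>*"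
  by (simp add: simrel_def brel_def)

lemma sym_brel: "sym (brel \<alpha> \<beta>)"
  by (auto simp: sym_def brel_def)

lemma sim_sym: "(u, v) \<in> simrel \<alpha> \<beta> \<Longrightarrow> (v, u) \<in> simrel \<alpha> \<beta>"
  using sym_rtrancl[OF sym_brel] unfolding simrel_brel sym_def by blast

lemma sim_trans: "(u, v) \<in> simrel \<alpha> \<beta> \<Longrightarrow> (v, w) \<in> simrel \<alpha> \<beta> \<Longrightarrow> (u, w) \<in> simrel \<alpha> \<beta>"
  unfolding simrel_brel by (rule rtrancl_trans)

lemma sim_refl[simp]: "(u, u) \<in> simrel \<alpha> \<beta>"
  unfolding simrel_brel by simp

lemma sim_edge: "A \<in> allBlocks \<alpha> \<beta> \<Longrightarrow> u \<in> A \<Longrightarrow> v \<in> A \<Longrightarrow> (u, v) \<in> simrel \<alpha> \<beta>"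
  unfolding simrel_brel brel_def by (rule r_into_rtrancl) blast

lemma top_in_all: "A \<in> \<alpha> \<Longrightarrow> liftTop ` A \<in> allBlocks \<alpha> \<beta>"
  by (simp add: allBlocks_def)
lemma bot_in_all: "B \<in> \<beta> \<Longrightarrow> liftBot ` B \<in> allBlocks \<alpha> \<beta>"
  by (simp add: allBlocks_def)

lemma sim_top: "A \<in> \<alpha> \<Longrightarrow> p \<in> A \<Longrightarrow> q \<in> A \<Longrightarrow> (liftTop p, liftTop q) \<in> simrel \<alpha> \<beta>"
  by (rule sim_edge[OF top_in_all]) auto
lemma sim_bot: "B \<in> \<beta> \<Longrightarrow> p \<in> B \<Longrightarrow> q \<in> B \<Longrightarrow> (liftBot p, liftBot q) \<in> simrel \<alpha> \<beta>"
  by (rule sim_edge[OF bot_in_all]) auto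

lemma sim_closed:
  assumes cl: "\<And>A. A \<in> allBlocks \<alpha> \<beta> \<Longrightarrow> A \<inter> C \<noteq> {} \<Longrightarrow> A \<subseteq> C"
    and "(u, v) \<in> simrel \<alpha> \<beta>" and "u \<in> C"
  shows "v \<in> C"
  using assms(2,3) unfolding simrel_brel
proof (induction rule: rtrancl_induct)
  case base then show ?case .
next
  case (step y z)
  then obtain A where "A \<in> allBlocks \<alpha> \<beta>" "y \<in> A" "z \<in> A" by (auto simp: brel_def)
  with step cl show ?case by blast
qed

lemma inj_liftTop: "inj liftTop"
proof (rule injI)
  fix x y show "liftTop x = liftTop y \<Longrightarrow> x = y" by (cases x; cases y) auto
qed
lemma inj_liftBot: "inj liftBot"
proof (rule injI)
  fix x y show "liftBot x = liftBot y \<Longrightarrow> x = y" by (cases x; cases y) auto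
qed
lemma inj_outer: "inj outer"
proof (rule injI)
  fix x y show "outer x = outer y \<Longrightarrow> x = y" by (cases x; cases y) auto
qed

lemma badI_top: "{p} \<in> \<alpha> \<Longrightarrow> (outer u, liftTop p) \<in> simrel \<alpha> \<beta> \<Longrightarrow> badpt \<alpha> \<beta> u"
  unfolding badpt_def using top_in_all[of "{p}" \<alpha> \<beta>] by (intro bexI[of _ "{liftTop p}"]) auto
lemma badI_bot: "{p} \<in> \<beta> \<Longrightarrow> (outer u, liftBot p) \<in> simrel \<alpha> \<beta> \<Longrightarrow> badpt \<alpha> \<beta> u"
  unfolding badpt_def using bot_in_all[of "{p}" \<beta> \<alpha>] by (intro bexI[of _ "{liftBot p}"]) auto

lemma bad_inv: "(outer u, outer v) \<in> simrel \<alpha> \<beta> \<Longrightarrow> badpt \<alpha> \<beta> u \<Longrightarrow> badpt \<alpha> \<beta> v"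
  unfolding badpt_def by (meson sim_sym sim_trans)

lemma badE:
  assumes "badpt \<alpha> \<beta> u"
  obtains p where "{p} \<in> \<alpha>" "(outer u, liftTop p) \<in> simrel \<alpha> \<beta>"
  | p where "{p} \<in> \<beta>" "(outer u, liftBot p) \<in> simrel \<alpha> \<beta>"
proof -
  from assms obtain A x where A: "A \<in> allBlocks \<alpha> \<beta>" "A = {x}" "(outer u, x) \<in> simrel \<alpha> \<beta>"
    unfolding badpt_def by blast
  from A(1) consider B where "B \<in> \<alpha>" "A = liftTop ` B" | B where "B \<in> \<beta>" "A = liftBot ` B"
    unfolding allBlocks_def by blast
  then show ?thesis
  proof cases
    case 1
    have "x \<in> liftTop ` B" using 1 A by blast
    then obtain p where p: "p \<in> B" "liftTop p = x" by blast
    have "liftTop ` B = liftTop ` {p}" using 1 A p by simp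
    then have "B = {p}" using inj_liftTop by (simp only: inj_image_eq_iff)
    then show ?thesis using that(1) 1 A p by blast
  next
    case 2
    have "x \<in> liftBot ` B" using 2 A by blast
    then obtain p where p: "p \<in> B" "liftBot p = x" by blast
    have "liftBot ` B = liftBot ` {p}" using 2 A p by simp
    then have "B = {p}" using inj_liftBot by (simp only: inj_image_eq_iff)
    then show ?thesis using that(2) 2 A p by blast
  qed
qed



definition blk :: "nat \<Rightarrow> pt set set \<Rightarrow> pt set set \<Rightarrow> pt \<Rightarrow> pt set" where
  "blk n \<alpha> \<beta> u = (if badpt \<alpha> \<beta> u then {u} else {v \<in> carrierX n. (outer u, outer v) \<in> simrel \<alpha> \<beta>})"

lemma star_blk: "star n \<alpha> \<beta> = blk n \<alpha> \<beta> ` carrierX n"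
  by (simp add: star_def blk_def)

lemma carrier_simps[simp]: "Inl x \<in> carrierX n \<longleftrightarrow> x \<in> {1..n}" "Inr x \<in> carrierX n \<longleftrightarrow> x \<in> {1..n}"
  by (auto simp: carrierX_def)

lemma carrier_cases: "p \<in> carrierX n \<Longrightarrow> (\<And>x. p = Inl x \<Longrightarrow> x \<in> {1..n} \<Longrightarrow> P) \<Longrightarrow> (\<And>x. p = Inr x \<Longrightarrow> x \<in> {1..n} \<Longrightarrow> P) \<Longrightarrow> P"
  by (cases p) auto

lemma PI_cover: "a \<in> PIstar n \<Longrightarrow> p \<in> carrierX n \<Longrightarrow> \<exists>A\<in>a. p \<in> A"
  by (auto simp: PIstar_def is_partition_def)
lemma PI_disj: "a \<in> PIstar n \<Longrightarrow> A \<in> a \<Longrightarrow> B \<in> a \<Longrightarrow> p \<in> A \<Longrightarrow> p \<in> B \<Longrightarrow> A = B"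
  by (auto simp: PIstar_def is_partition_def)
lemma PI_sub: "a \<in> PIstar n \<Longrightarrow> A \<in> a \<Longrightarrow> p \<in> A \<Longrightarrow> p \<in> carrierX n"
  by (auto simp: PIstar_def is_partition_def)
lemma PI_ne: "a \<in> PIstar n \<Longrightarrow> A \<in> a \<Longrightarrow> A \<noteq> {}"
  by (auto simp: PIstar_def is_partition_def)
lemma PI_line: "a \<in> PIstar n \<Longrightarrow> A \<in> a \<Longrightarrow> \<not>(\<exists>x. A = {x}) \<Longrightarrow> (\<exists>i. Inl i \<in> A) \<and> (\<exists>j. Inr j \<in> A)"
proof -
  assume "a \<in> PIstar n" "A \<in> a" "\<not>(\<exists>x. A = {x})"
  then have "A \<inter> range Inl \<noteq> {} \<and> A \<inter> range Inr \<noteq> {}" unfolding PIstar_def by blast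
  then show ?thesis by blast
qed

lemma PI_line_Inl: "a \<in> PIstar n \<Longrightarrow> A \<in> a \<Longrightarrow> p \<in> A \<Longrightarrow> A \<noteq> {p} \<Longrightarrow> \<exists>i. Inl i \<in> A"
  using PI_line by (metis singletonD)
lemma PI_line_Inr: "a \<in> PIstar n \<Longrightarrow> A \<in> a \<Longrightarrow> p \<in> A \<Longrightarrow> A \<noteq> {p} \<Longrightarrow> \<exists>j. Inr j \<in> A"
  using PI_line by (metis singletonD)

lemma blk_self: "u \<in> carrierX n \<Longrightarrow> u \<in> blk n \<alpha> \<beta> u"
  by (simp add: blk_def)
lemma blk_sub: "u \<in> carrierX n \<Longrightarrow> blk n \<alpha> \<beta> u \<subseteq> carrierX n"
  by (auto simp: blk_def)
lemma blk_mem: assumes "w \<in> blk n \<alpha> \<beta> u" shows "blk n \<alpha> \<beta> w = blk n \<alpha> \<beta> u"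
proof (cases "badpt \<alpha> \<beta> u")
  case True then show ?thesis using assms by (simp add: blk_def)
next
  case False
  then have w: "(outer u, outer w) \<in> simrel \<alpha> \<beta>" using assms by (simp add: blk_def)
  then have "\<not> badpt \<alpha> \<beta> w" using False bad_inv sim_sym by blast
  then show ?thesis using False w by (auto simp: blk_def intro: sim_trans dest: sim_sym)
qed

lemma blk_good: "\<not> badpt \<alpha> \<beta> u \<Longrightarrow> v \<in> carrierX n \<Longrightarrow> (outer u, outer v) \<in> simrel \<alpha> \<beta> \<Longrightarrow> v \<in> blk n \<alpha> \<beta> u"
  by (simp add: blk_def)

lemma PI_block: "a \<in> PIstar n \<Longrightarrow> p \<in> carrierX n \<Longrightarrow> (\<And>A. A \<in> a \<Longrightarrow> p \<in> A \<Longrightarrow> P) \<Longrightarrow> P"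
  using PI_cover by blast

lemma blk_line:
  assumes a: "\<alpha> \<in> PIstar n" and b: "\<beta> \<in> PIstar n" and u: "u \<in> carrierX n" and g: "\<not> badpt \<alpha> \<beta> u"
  shows "(\<exists>i. Inl i \<in> blk n \<alpha> \<beta> u) \<and> (\<exists>j. Inr j \<in> blk n \<alpha> \<beta> u)"
  using u
proof (rule carrier_cases)
  fix i assume ui: "u = Inl i" "i \<in> {1..n}"
  obtain A where A: "A \<in> \<alpha>" "Inl i \<in> A" using PI_block[OF a, of "Inl i"] ui by auto
  have "A \<noteq> {Inl i}"
  proof
    assume "A = {Inl i}"
    then have "{Inl i} \<in> \<alpha>" using A by simp
    moreover have "(outer u, liftTop (Inl i)) \<in> simrel \<alpha> \<beta>" using ui by simp
    ultimately have "badpt \<alpha> \<beta> u" by (rule badI_top)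
    with g show False ..
  qed
  then obtain j where j: "Inr j \<in> A" using PI_line_Inr[OF a A(1,2)] by blast
  have jn: "j \<in> {1..n}" using PI_sub[OF a A(1) j] by simp
  have s1: "(outer u, Md j) \<in> simrel \<alpha> \<beta>" using sim_top[OF A(1,2) j, of \<beta>] ui by simp
  obtain B where B: "B \<in> \<beta>" "Inl j \<in> B" using PI_block[OF b, of "Inl j"] jn by auto
  have "B \<noteq> {Inl j}"
  proof
    assume "B = {Inl j}"
    then have "{Inl j} \<in> \<beta>" using B by simp
    moreover have "(outer u, liftBot (Inl j)) \<in> simrel \<alpha> \<beta>" using s1 by simp
    ultimately have "badpt \<alpha> \<beta> u" by (rule badI_bot)
    with g show False ..
  qed
  then obtain k where k: "Inr k \<in> B" using PI_line_Inr[OF b B(1,2)] by blast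
  have kn: "k \<in> {1..n}" using PI_sub[OF b B(1) k] by simp
  have "(Md j, Bt k) \<in> simrel \<alpha> \<beta>" using sim_bot[OF B(1,2) k, of \<alpha>] by simp
  then have "(outer u, Bt k) \<in> simrel \<alpha> \<beta>" by (rule sim_trans[OF s1])
  then have "Inr k \<in> blk n \<alpha> \<beta> u" using blk_good[OF g, of "Inr k" n] kn by simp
  then show ?thesis using blk_self[OF u] ui by blast
next
  fix k assume uk: "u = Inr k" "k \<in> {1..n}"
  obtain B where B: "B \<in> \<beta>" "Inr k \<in> B" using PI_block[OF b, of "Inr k"] uk by auto
  have "B \<noteq> {Inr k}"
  proof
    assume "B = {Inr k}"
    then have "{Inr k} \<in> \<beta>" using B by simp
    moreover have "(outer u, liftBot (Inr k)) \<in> simrel \<alpha> \<beta>" using uk by simp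
    ultimately have "badpt \<alpha> \<beta> u" by (rule badI_bot)
    with g show False ..
  qed
  then obtain j where j: "Inl j \<in> B" using PI_line_Inl[OF b B(1,2)] by blast
  have jn: "j \<in> {1..n}" using PI_sub[OF b B(1) j] by simp
  have s1: "(outer u, Md j) \<in> simrel \<alpha> \<beta>" using sim_bot[OF B(1,2) j, of \<alpha>] uk by simp
  obtain A where A: "A \<in> \<alpha>" "Inr j \<in> A" using PI_block[OF a, of "Inr j"] jn by auto
  have "A \<noteq> {Inr j}"
  proof
    assume "A = {Inr j}"
    then have "{Inr j} \<in> \<alpha>" using A by simp
    moreover have "(outer u, liftTop (Inr j)) \<in> simrel \<alpha> \<beta>" using s1 by simp
    ultimately have "badpt \<alpha> \<beta> u" by (rule badI_top)
    with g show False ..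
  qed
  then obtain i where i: "Inl i \<in> A" using PI_line_Inl[OF a A(1,2)] by blast
  have iN: "i \<in> {1..n}" using PI_sub[OF a A(1) i] by simp
  have "(Md j, Tp i) \<in> simrel \<alpha> \<beta>" using sim_top[OF A(1,2) i, of \<beta>] by simp
  then have "(outer u, Tp i) \<in> simrel \<alpha> \<beta>" by (rule sim_trans[OF s1])
  then have "Inl i \<in> blk n \<alpha> \<beta> u" using blk_good[OF g, of "Inl i" n] iN by simp
  then show ?thesis using blk_self[OF u] uk by blast
qed

lemma star_PI:
  assumes a: "\<alpha> \<in> PIstar n" and b: "\<beta> \<in> PIstar n"
  shows "star n \<alpha> \<beta> \<in> PIstar n"
proof -
  let ?S = "blk n \<alpha> \<beta> ` carrierX n"
  have 1: "\<forall>A\<in>?S. A \<noteq> {}" using blk_self by blast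
  have 2: "\<forall>A\<in>?S. \<forall>B\<in>?S. A \<noteq> B \<longrightarrow> A \<inter> B = {}"
  proof (intro ballI impI)
    fix A B assume "A \<in> ?S" "B \<in> ?S" "A \<noteq> B"
    then obtain u v where uv: "A = blk n \<alpha> \<beta> u" "B = blk n \<alpha> \<beta> v" by blast
    show "A \<inter> B = {}"
    proof (rule ccontr)
      assume "A \<inter> B \<noteq> {}"
      then obtain w where "w \<in> A" "w \<in> B" by blast
      then have "blk n \<alpha> \<beta> w = A" "blk n \<alpha> \<beta> w = B" using uv blk_mem by metis+
      with \<open>A \<noteq> B\<close> show False by simp
    qed
  qed
  have 3: "\<Union> ?S = carrierX n"
  proof
    show "\<Union> ?S \<subseteq> carrierX n" using blk_sub by blast
    show "carrierX n \<subseteq> \<Union> ?S" using blk_self by blast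
  qed
  have 4: "\<forall>A\<in>?S. (\<exists>x. A = {x}) \<or> (A \<inter> range Inl \<noteq> {} \<and> A \<inter> range Inr \<noteq> {})"
  proof
    fix A assume "A \<in> ?S"
    then obtain u where u: "u \<in> carrierX n" "A = blk n \<alpha> \<beta> u" by blast
    show "(\<exists>x. A = {x}) \<or> (A \<inter> range Inl \<noteq> {} \<and> A \<inter> range Inr \<noteq> {})"
    proof (cases "badpt \<alpha> \<beta> u")
      case True then show ?thesis using u by (simp add: blk_def)
    next
      case False
      from blk_line[OF a b u(1) False] obtain i j where "Inl i \<in> A" "Inr j \<in> A" using u by blast
      then show ?thesis by blast
    qed
  qed
  show ?thesis unfolding star_blk PIstar_def is_partition_def using 1 2 3 4 by blast
qed


lemma sim_iff:
  assumes cl: "\<And>A. A \<in> allBlocks \<alpha> \<beta> \<Longrightarrow> A \<inter> C \<noteq> {} \<Longrightarrow> A \<subseteq> C"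
    and c0: "c0 \<in> C" and conn: "\<And>c. c \<in> C \<Longrightarrow> (c0, c) \<in> simrel \<alpha> \<beta>"
  shows "(c0, v) \<in> simrel \<alpha> \<beta> \<longleftrightarrow> v \<in> C"
  using sim_closed[OF cl _ c0] conn by blast

definition Pm :: "nat \<Rightarrow> (nat \<Rightarrow> nat) \<Rightarrow> pt set set" where
  "Pm n \<pi> = (\<lambda>x. {Inl x, Inr (\<pi> x)}) ` {1..n}"

lemma Sn_Pm: "Sn n = {Pm n \<pi> | \<pi>. bij_betw \<pi> {1..n} {1..n}}"
  by (auto simp: Sn_def Pm_def)

lemma Sn_nosing: "a \<in> Sn n \<Longrightarrow> {p} \<notin> a"
  by (auto simp: Sn_def doubleton_eq_iff)

lemma Sn_tops: "a \<in> Sn n \<Longrightarrow> B \<in> a \<Longrightarrow> Inl x \<in> B \<Longrightarrow> Inl y \<in> B \<Longrightarrow> x = y"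
  by (auto simp: Sn_def)

lemma tops_lemma:
  assumes a: "a \<in> PIstar n"
    and ns: "\<And>x. x \<in> {1..n} \<Longrightarrow> {Inl x} \<notin> a"
    and tp: "\<And>A x y. A \<in> a \<Longrightarrow> Inl x \<in> A \<Longrightarrow> Inl y \<in> A \<Longrightarrow> x = y"
  shows "a \<in> Sn n"
proof -
  have ex: "\<exists>j A. A \<in> a \<and> Inl x \<in> A \<and> Inr j \<in> A" if x: "x \<in> {1..n}" for x
  proof -
    obtain A where A: "A \<in> a" "Inl x \<in> A" using PI_block[OF a, of "Inl x"] x by auto
    have "A \<noteq> {Inl x}" using ns[OF x] A by auto
    then obtain j where "Inr j \<in> A" using PI_line_Inr[OF a A] by blast
    then show ?thesis using A by blast
  qed
  define f where "f x = (SOME j. \<exists>A. A \<in> a \<and> Inl x \<in> A \<and> Inr j \<in> A)" for x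
  have fA: "\<exists>A. A \<in> a \<and> Inl x \<in> A \<and> Inr (f x) \<in> A" if "x \<in> {1..n}" for x
    unfolding f_def using someI_ex[OF ex[OF that]] .
  have fn: "f x \<in> {1..n}" if "x \<in> {1..n}" for x
    using fA[OF that] PI_sub[OF a] by fastforce
  have inj: "inj_on f {1..n}"
  proof (rule inj_onI)
    fix x y assume x: "x \<in> {1..n}" and y: "y \<in> {1..n}" and e: "f x = f y"
    obtain A where A: "A \<in> a" "Inl x \<in> A" "Inr (f x) \<in> A" using fA[OF x] by blast
    obtain B where B: "B \<in> a" "Inl y \<in> B" "Inr (f y) \<in> B" using fA[OF y] by blast
    have "A = B" using PI_disj[OF a A(1) B(1) A(3)] B(3) e by simp
    then show "x = y" using tp[OF A(1) A(2)] B(2) by simp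
  qed
  have img: "f ` {1..n} = {1..n}"
    using endo_inj_surj[OF _ _ inj] fn by blast
  then have bij: "bij_betw f {1..n} {1..n}" using inj by (simp add: bij_betw_def)
  have blk: "{Inl x, Inr (f x)} \<in> a" if x: "x \<in> {1..n}" for x
  proof -
    obtain A where A: "A \<in> a" "Inl x \<in> A" "Inr (f x) \<in> A" using fA[OF x] by blast
    have "A \<subseteq> {Inl x, Inr (f x)}"
    proof
      fix p assume p: "p \<in> A"
      have "p \<in> carrierX n" using PI_sub[OF a A(1) p] .
      then show "p \<in> {Inl x, Inr (f x)}"
      proof (rule carrier_cases)
        fix y assume "p = Inl y" then show ?thesis using tp[OF A(1) A(2)] p by simp
      next
        fix j assume pj: "p = Inr j" "j \<in> {1..n}"
        have "j \<in> f ` {1..n}" using img pj by simp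
        then obtain y where y: "y \<in> {1..n}" "j = f y" by blast
        obtain B where B: "B \<in> a" "Inl y \<in> B" "Inr (f y) \<in> B" using fA[OF y(1)] by blast
        have "A = B" using PI_disj[OF a A(1) B(1), of p] p pj y B(3) by simp
        then have "y = x" using tp[OF A(1) A(2)] B(2) by simp
        then show ?thesis using pj y by simp
      qed
    qed
    then have "A = {Inl x, Inr (f x)}" using A by blast
    then show ?thesis using A by simp
  qed
  have "a = Pm n f"
  proof
    show "Pm n f \<subseteq> a" using blk by (auto simp: Pm_def)
    show "a \<subseteq> Pm n f"
    proof
      fix B assume B: "B \<in> a"
      obtain p where p: "p \<in> B" using PI_ne[OF a B] by blast
      have "p \<in> carrierX n" using PI_sub[OF a B p] .
      then show "B \<in> Pm n f"
      proof (rule carrier_cases)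
        fix x assume px: "p = Inl x" "x \<in> {1..n}"
        have "B = {Inl x, Inr (f x)}" using PI_disj[OF a B blk[OF px(2)], of p] p px by simp
        then show ?thesis using px by (auto simp: Pm_def)
      next
        fix j assume pj: "p = Inr j" "j \<in> {1..n}"
        have "j \<in> f ` {1..n}" using img pj by simp
        then obtain x where x: "x \<in> {1..n}" "j = f x" by blast
        have "B = {Inl x, Inr (f x)}" using PI_disj[OF a B blk[OF x(1)], of p] p pj x by simp
        then show ?thesis using x by (auto simp: Pm_def)
      qed
    qed
  qed
  then show ?thesis using bij by (auto simp: Sn_Pm)
qed

lemma K_lemma:
  assumes a: "\<alpha> \<in> PIstar n" and b: "\<beta> \<in> PIstar n" and s: "star n \<alpha> \<beta> \<in> Sn n"
  shows "\<alpha> \<in> Sn n"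
proof -
  have good: "\<not> badpt \<alpha> \<beta> (Inl x)" if x: "x \<in> {1..n}" for x
  proof
    assume "badpt \<alpha> \<beta> (Inl x)"
    then have "{Inl x} \<in> star n \<alpha> \<beta>" using x unfolding star_blk blk_def by force
    then show False using Sn_nosing[OF s] by blast
  qed
  show ?thesis
  proof (rule tops_lemma[OF a])
    fix x assume x: "x \<in> {1..n}"
    show "{Inl x} \<notin> \<alpha>"
    proof
      assume "{Inl x} \<in> \<alpha>"
      then have "badpt \<alpha> \<beta> (Inl x)" by (rule badI_top) simp
      with good[OF x] show False ..
    qed
  next
    fix A x y assume A: "A \<in> \<alpha>" "Inl x \<in> A" "Inl y \<in> A"
    have x: "x \<in> {1..n}" and y: "y \<in> {1..n}" using PI_sub[OF a A(1) A(2)] PI_sub[OF a A(1) A(3)] by simp_all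
    have "(Tp x, Tp y) \<in> simrel \<alpha> \<beta>" using sim_top[OF A(1) A(2) A(3), of \<beta>] by simp
    then have "Inl y \<in> blk n \<alpha> \<beta> (Inl x)" using blk_good[OF good[OF x], of "Inl y"] y by simp
    moreover have "Inl x \<in> blk n \<alpha> \<beta> (Inl x)" using blk_self x by simp
    moreover have "blk n \<alpha> \<beta> (Inl x) \<in> star n \<alpha> \<beta>" using x unfolding star_blk by simp
    ultimately show "x = y" using Sn_tops[OF s] by blast
  qed
qed



definition gmap :: "(nat \<Rightarrow> nat) \<Rightarrow> pt \<Rightarrow> pt" where
  "gmap \<pi> p = (case p of Inl x \<Rightarrow> Inl (\<pi> x) | Inr j \<Rightarrow> Inr j)"

lemma gmap_simps[simp]: "gmap \<pi> (Inl x) = Inl (\<pi> x)" "gmap \<pi> (Inr j) = Inr j"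
  by (simp_all add: gmap_def)

definition Rl :: "nat \<Rightarrow> (nat \<Rightarrow> nat) \<Rightarrow> pt set set \<Rightarrow> pt set set" where
  "Rl n \<pi> a = (\<lambda>A. {p \<in> carrierX n. gmap \<pi> p \<in> A}) ` a"

lemma liftBot_ne_Tp[simp]: "liftBot q \<noteq> Tp x"
  by (cases q) auto
lemma liftBot_ne_Tp'[simp]: "Tp x \<noteq> liftBot q"
  by (cases q) auto
lemma liftBot_Md': "Md k = liftBot q \<longleftrightarrow> q = Inl k"
  by (cases q) auto
lemma liftBot_Bt': "Bt k = liftBot q \<longleftrightarrow> q = Inr k"
  by (cases q) auto
lemma liftBot_Md: "liftBot q = Md k \<longleftrightarrow> q = Inl k"
  by (cases q) auto
lemma liftBot_Bt: "liftBot q = Bt k \<longleftrightarrow> q = Inr k"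
  by (cases q) auto

lemma Pm_allBlocks:
  assumes "A' \<in> allBlocks (Pm n \<pi>) a"
  obtains x where "x \<in> {1..n}" "A' = {Tp x, Md (\<pi> x)}" | B where "B \<in> a" "A' = liftBot ` B"
  using assms unfolding allBlocks_def Pm_def by auto

lemma blk_relabel:
  assumes pi: "bij_betw \<pi> {1..n} {1..n}" and a: "a \<in> PIstar n"
    and u: "u \<in> carrierX n" and A: "A \<in> a" and uA: "gmap \<pi> u \<in> A"
  shows "blk n (Pm n \<pi>) a u = {p \<in> carrierX n. gmap \<pi> p \<in> A}"
proof -
  define C where "C = {Tp x | x. x \<in> {1..n} \<and> Inl (\<pi> x) \<in> A} \<union> liftBot ` A"
  let ?h = "liftBot (gmap \<pi> u)"
  have PmB: "{Inl x, Inr (\<pi> x)} \<in> Pm n \<pi>" if "x \<in> {1..n}" for x using that by (auto simp: Pm_def)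
  have cl: "A' \<subseteq> C" if A': "A' \<in> allBlocks (Pm n \<pi>) a" and m: "A' \<inter> C \<noteq> {}" for A'
    using A'
  proof (cases rule: Pm_allBlocks)
    case (1 x)
    have "Inl (\<pi> x) \<in> A"
    proof -
      from m 1 have "Tp x \<in> C \<or> Md (\<pi> x) \<in> C" by auto
      then show ?thesis unfolding C_def by (auto simp: liftBot_Md liftBot_Md')
    qed
    then show ?thesis using 1 unfolding C_def by force
  next
    case (2 B)
    from m 2 obtain q where q: "q \<in> B" "liftBot q \<in> C" by auto
    then have "q \<in> A" unfolding C_def using inj_liftBot by (auto simp: inj_eq)
    then have "B = A" using PI_disj[OF a 2(1) A q(1)] by simp
    then show ?thesis using 2 unfolding C_def by auto
  qed
  have hC: "\<And>c. c \<in> C \<Longrightarrow> (?h, c) \<in> simrel (Pm n \<pi>) a"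
  proof -
    fix c assume "c \<in> C"
    then consider x where "x \<in> {1..n}" "Inl (\<pi> x) \<in> A" "c = Tp x" | q where "q \<in> A" "c = liftBot q"
      unfolding C_def by auto
    then show "(?h, c) \<in> simrel (Pm n \<pi>) a"
    proof cases
      case 1
      have e1: "(?h, liftBot (Inl (\<pi> x))) \<in> simrel (Pm n \<pi>) a" using sim_bot[OF A uA 1(2)] .
      have "(Tp x, Md (\<pi> x)) \<in> simrel (Pm n \<pi>) a" using sim_top[OF PmB[OF 1(1)], of "Inl x" "Inr (\<pi> x)" a] by simp
      then have "(Md (\<pi> x), Tp x) \<in> simrel (Pm n \<pi>) a" by (rule sim_sym)
      then show ?thesis using e1 1 sim_trans by fastforce
    next
      case 2 then show ?thesis using sim_bot[OF A uA] by simp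
    qed
  qed
  have uh: "(outer u, ?h) \<in> simrel (Pm n \<pi>) a" and uC: "outer u \<in> C"
  proof -
    have "(outer u, ?h) \<in> simrel (Pm n \<pi>) a \<and> outer u \<in> C"
      using u
    proof (rule carrier_cases)
      fix x assume ux: "u = Inl x" "x \<in> {1..n}"
      have "(Tp x, Md (\<pi> x)) \<in> simrel (Pm n \<pi>) a" using sim_top[OF PmB[OF ux(2)], of "Inl x" "Inr (\<pi> x)" a] by simp
      then show ?thesis using ux uA unfolding C_def by auto
    next
      fix j assume uj: "u = Inr j" "j \<in> {1..n}"
      then show ?thesis using uA unfolding C_def by force
    qed
    then show "(outer u, ?h) \<in> simrel (Pm n \<pi>) a" "outer u \<in> C" by auto
  qed
  have iff: "(outer u, c) \<in> simrel (Pm n \<pi>) a \<longleftrightarrow> c \<in> C" for c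
    by (rule sim_iff[OF cl uC]) (auto intro: sim_trans[OF uh] hC)
  have vC: "outer v \<in> C \<longleftrightarrow> gmap \<pi> v \<in> A" if v: "v \<in> carrierX n" for v
    using v
  proof (rule carrier_cases)
    fix x assume "v = Inl x" "x \<in> {1..n}"
    then show ?thesis unfolding C_def by (auto simp: liftBot_Md liftBot_Md') 
  next
    fix j assume "v = Inr j" "j \<in> {1..n}"
    then show ?thesis unfolding C_def by (auto simp: liftBot_Bt liftBot_Bt') 
  qed
  have injg: "gmap \<pi> v = gmap \<pi> u \<Longrightarrow> v \<in> carrierX n \<Longrightarrow> v = u" for v
  proof -
    assume e: "gmap \<pi> v = gmap \<pi> u" and v: "v \<in> carrierX n"
    have inj: "inj_on \<pi> {1..n}" using pi by (simp add: bij_betw_def)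
    show "v = u" using v u e inj by (cases v; cases u) (auto dest: inj_onD)
  qed
  show ?thesis
  proof (cases "A = {gmap \<pi> u}")
    case True
    have "badpt (Pm n \<pi>) a u" using badI_bot[of "gmap \<pi> u" a u "Pm n \<pi>"] A True uh by simp
    then have "blk n (Pm n \<pi>) a u = {u}" by (simp add: blk_def)
    also have "\<dots> = {p \<in> carrierX n. gmap \<pi> p \<in> A}" using True u injg by auto
    finally show ?thesis .
  next
    case False
    have nb: "\<not> badpt (Pm n \<pi>) a u"
    proof
      assume "badpt (Pm n \<pi>) a u"
      then show False
      proof (cases rule: badE)
        case (1 p)
        then show False unfolding Pm_def by (auto simp: doubleton_eq_iff)
      next
        case (2 p)
        then have "liftBot p \<in> C" using iff by simp
        then have "p \<in> A" unfolding C_def using inj_liftBot by (auto simp: inj_eq)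
        then have "A = {p}" using PI_disj[OF a A 2(1)] by simp
        then show False using False uA by simp
      qed
    qed
    then show ?thesis using iff vC by (auto simp: blk_def)
  qed
qed

lemma relabel:
  assumes pi: "bij_betw \<pi> {1..n} {1..n}" and a: "a \<in> PIstar n"
  shows "star n (Pm n \<pi>) a = Rl n \<pi> a"
proof
  show "star n (Pm n \<pi>) a \<subseteq> Rl n \<pi> a"
  proof
    fix B assume "B \<in> star n (Pm n \<pi>) a"
    then obtain u where u: "u \<in> carrierX n" "B = blk n (Pm n \<pi>) a u" unfolding star_blk by blast
    have "gmap \<pi> u \<in> carrierX n" using u(1) pi by (cases u) (auto simp: bij_betw_def)
    then obtain A where A: "A \<in> a" "gmap \<pi> u \<in> A" using PI_block[OF a] by blast
    show "B \<in> Rl n \<pi> a" using blk_relabel[OF pi a u(1) A] u A unfolding Rl_def by blast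
  qed
next
  show "Rl n \<pi> a \<subseteq> star n (Pm n \<pi>) a"
  proof
    fix B assume "B \<in> Rl n \<pi> a"
    then obtain A where A: "A \<in> a" "B = {p \<in> carrierX n. gmap \<pi> p \<in> A}" unfolding Rl_def by blast
    obtain q where q: "q \<in> A" using PI_ne[OF a A(1)] by blast
    have "q \<in> carrierX n" using PI_sub[OF a A(1) q] .
    then obtain u where u: "u \<in> carrierX n" "gmap \<pi> u = q"
    proof (rule carrier_cases)
      fix y assume qy: "q = Inl y" "y \<in> {1..n}"
      then have "y \<in> \<pi> ` {1..n}" using pi by (simp add: bij_betw_def)
      then obtain x where "x \<in> {1..n}" "\<pi> x = y" by blast
      then show ?thesis using that[of "Inl x"] qy by simp
    next
      fix j assume "q = Inr j" "j \<in> {1..n}"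
      then show ?thesis using that[of "Inr j"] by simp
    qed
    have "B = blk n (Pm n \<pi>) a u" using blk_relabel[OF pi a u(1) A(1)] u q A by simp
    then show "B \<in> star n (Pm n \<pi>) a" using u unfolding star_blk by blast
  qed
qed



lemma Pm_Sn: "bij_betw \<pi> {1..n} {1..n} \<Longrightarrow> Pm n \<pi> \<in> Sn n"
  by (auto simp: Sn_Pm)

lemma Pm_PI: assumes pi: "bij_betw \<pi> {1..n} {1..n}" shows "Pm n \<pi> \<in> PIstar n"
proof -
  have m: "\<pi> x \<in> {1..n}" if "x \<in> {1..n}" for x using pi that by (auto simp: bij_betw_def)
  have 1: "\<forall>A\<in>Pm n \<pi>. A \<noteq> {}" by (auto simp: Pm_def)
  have 2: "\<forall>A\<in>Pm n \<pi>. \<forall>B\<in>Pm n \<pi>. A \<noteq> B \<longrightarrow> A \<inter> B = {}"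
  proof (intro ballI impI)
    fix A B assume "A \<in> Pm n \<pi>" "B \<in> Pm n \<pi>" "A \<noteq> B"
    then obtain x y where xy: "x \<in> {1..n}" "y \<in> {1..n}" "A = {Inl x, Inr (\<pi> x)}" "B = {Inl y, Inr (\<pi> y)}"
      unfolding Pm_def by blast
    then have "x \<noteq> y" using \<open>A \<noteq> B\<close> by auto
    then have "\<pi> x \<noteq> \<pi> y" using pi xy by (auto simp: bij_betw_def dest: inj_onD)
    then show "A \<inter> B = {}" using xy \<open>x \<noteq> y\<close> by auto
  qed
  have 3: "\<Union>(Pm n \<pi>) = carrierX n"
  proof
    show "\<Union>(Pm n \<pi>) \<subseteq> carrierX n" using m by (auto simp: Pm_def)
    show "carrierX n \<subseteq> \<Union>(Pm n \<pi>)"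
    proof
      fix p assume "p \<in> carrierX n"
      then show "p \<in> \<Union>(Pm n \<pi>)"
      proof (rule carrier_cases)
        fix x assume "p = Inl x" "x \<in> {1..n}" then show ?thesis by (auto simp: Pm_def)
      next
        fix j assume pj: "p = Inr j" "j \<in> {1..n}"
        then have "j \<in> \<pi> ` {1..n}" using pi by (simp add: bij_betw_def)
        then obtain x where "x \<in> {1..n}" "j = \<pi> x" by blast
        then show ?thesis using pj by (auto simp: Pm_def)
      qed
    qed
  qed
  have 4: "\<forall>A\<in>Pm n \<pi>. (\<exists>x. A = {x}) \<or> (A \<inter> range Inl \<noteq> {} \<and> A \<inter> range Inr \<noteq> {})"
    by (auto simp: Pm_def)
  show ?thesis unfolding PIstar_def is_partition_def using 1 2 3 4 by blast
qed

lemma Sn_PI: "a \<in> Sn n \<Longrightarrow> a \<in> PIstar n"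
  using Pm_PI by (auto simp: Sn_Pm)

lemma Pm_comp:
  assumes pi: "bij_betw \<pi> {1..n} {1..n}" and si: "bij_betw \<sigma> {1..n} {1..n}"
  shows "star n (Pm n \<pi>) (Pm n \<sigma>) = Pm n (\<sigma> \<circ> \<pi>)"
proof -
  have r: "star n (Pm n \<pi>) (Pm n \<sigma>) = Rl n \<pi> (Pm n \<sigma>)" by (rule relabel[OF pi Pm_PI[OF si]])
  have inj: "inj_on \<pi> {1..n}" using pi by (simp add: bij_betw_def)
  have im: "\<pi> ` {1..n} = {1..n}" using pi by (simp add: bij_betw_def)
  have sm: "\<sigma> y \<in> {1..n}" if "y \<in> {1..n}" for y using si that by (auto simp: bij_betw_def)
  have G: "{p \<in> carrierX n. gmap \<pi> p \<in> {Inl (\<pi> x), Inr (\<sigma> (\<pi> x))}} = {Inl x, Inr (\<sigma> (\<pi> x))}"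
    if x: "x \<in> {1..n}" for x
  proof
    show "{p \<in> carrierX n. gmap \<pi> p \<in> {Inl (\<pi> x), Inr (\<sigma> (\<pi> x))}} \<subseteq> {Inl x, Inr (\<sigma> (\<pi> x))}"
    proof
      fix p assume p: "p \<in> {p \<in> carrierX n. gmap \<pi> p \<in> {Inl (\<pi> x), Inr (\<sigma> (\<pi> x))}}"
      then show "p \<in> {Inl x, Inr (\<sigma> (\<pi> x))}" using x inj by (cases p) (auto dest: inj_onD)
    qed
    show "{Inl x, Inr (\<sigma> (\<pi> x))} \<subseteq> {p \<in> carrierX n. gmap \<pi> p \<in> {Inl (\<pi> x), Inr (\<sigma> (\<pi> x))}}"
    proof -
      have "\<pi> x \<in> {1..n}" using x im by blast
      then have "\<sigma> (\<pi> x) \<in> {1..n}" using sm by blast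
      then show ?thesis using x by simp
    qed
  qed
  have "Rl n \<pi> (Pm n \<sigma>) = (\<lambda>y. {p \<in> carrierX n. gmap \<pi> p \<in> {Inl y, Inr (\<sigma> y)}}) ` (\<pi> ` {1..n})"
    unfolding Rl_def Pm_def im by (simp add: image_image)
  also have "\<dots> = (\<lambda>x. {p \<in> carrierX n. gmap \<pi> p \<in> {Inl (\<pi> x), Inr (\<sigma> (\<pi> x))}}) ` {1..n}"
    by (simp add: image_image)
  also have "\<dots> = (\<lambda>x. {Inl x, Inr (\<sigma> (\<pi> x))}) ` {1..n}"
    using G by (intro image_cong) auto
  finally show ?thesis using r by (simp add: Pm_def)
qed

lemma bij_comp: "bij_betw \<pi> {1..n} {1..n} \<Longrightarrow> bij_betw \<sigma> {1..n} {1..n} \<Longrightarrow> bij_betw (\<sigma> \<circ> \<pi>) {1..n} {1..n}"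
  by (rule bij_betw_trans)

lemma Sn_closed: "a \<in> Sn n \<Longrightarrow> b \<in> Sn n \<Longrightarrow> star n a b \<in> Sn n"
proof -
  assume "a \<in> Sn n" "b \<in> Sn n"
  then obtain \<pi> \<sigma> where p: "bij_betw \<pi> {1..n} {1..n}" "a = Pm n \<pi>" and s: "bij_betw \<sigma> {1..n} {1..n}" "b = Pm n \<sigma>"
    by (auto simp: Sn_Pm)
  then have "star n a b = Pm n (\<sigma> \<circ> \<pi>)" using Pm_comp by simp
  then show ?thesis using Pm_Sn[OF bij_comp[OF p(1) s(1)]] by simp
qed

lemma transp_bij: "i \<in> {1..n} \<Longrightarrow> j \<in> {1..n} \<Longrightarrow> bij_betw (Transposition.transpose i j) {1..n} {1..n}"
  by (rule permutes_imp_bij[OF permutes_swap_id])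

lemma Rl_PI: "bij_betw \<pi> {1..n} {1..n} \<Longrightarrow> a \<in> PIstar n \<Longrightarrow> Rl n \<pi> a \<in> PIstar n"
proof -
  assume "bij_betw \<pi> {1..n} {1..n}" "a \<in> PIstar n"
  then show ?thesis using relabel[of \<pi> n a] star_PI[OF Pm_PI, of \<pi> n a] by simp
qed

lemma Rl_invol:
  assumes ij: "i \<in> {1..n}" "j \<in> {1..n}" and a: "a \<in> PIstar n"
  shows "Rl n (Transposition.transpose i j) (Rl n (Transposition.transpose i j) a) = a"
proof -
  let ?t = "Transposition.transpose i j"
  have c: "gmap ?t p \<in> carrierX n" if "p \<in> carrierX n" for p
    using that ij by (cases p) (auto simp: Transposition.transpose_def)
  have gg: "gmap ?t (gmap ?t p) = p" for p by (cases p) auto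
  have e: "{p \<in> carrierX n. gmap ?t p \<in> {q \<in> carrierX n. gmap ?t q \<in> A}} = A" if A: "A \<in> a" for A
  proof
    show "{p \<in> carrierX n. gmap ?t p \<in> {q \<in> carrierX n. gmap ?t q \<in> A}} \<subseteq> A"
      using gg by auto
    show "A \<subseteq> {p \<in> carrierX n. gmap ?t p \<in> {q \<in> carrierX n. gmap ?t q \<in> A}}"
    proof
      fix p assume p: "p \<in> A"
      have pc: "p \<in> carrierX n" using PI_sub[OF a A p] .
      show "p \<in> {p \<in> carrierX n. gmap ?t p \<in> {q \<in> carrierX n. gmap ?t q \<in> A}}"
        using pc c[OF pc] gg[of p] p by simp
    qed
  qed
  show ?thesis unfolding Rl_def image_image using e by simp
qed

definition zz :: "nat \<Rightarrow> pt set set" where "zz n = (\<lambda>p. {p}) ` carrierX n"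

lemma zz_PI: "zz n \<in> PIstar n"
  unfolding PIstar_def is_partition_def zz_def by auto

lemma zz_notSn: "n \<ge> 1 \<Longrightarrow> zz n \<notin> Sn n"
  using Sn_nosing[of "zz n" n "Inl 1"] by (auto simp: zz_def)



definition lines :: "pt set set \<Rightarrow> pt set set" where
  "lines a = {A \<in> a. \<not>(\<exists>x. A = {x})}"

lemma finite_carrier: "finite (carrierX n)"
  by (simp add: carrierX_def)

lemma PI_finite: "a \<in> PIstar n \<Longrightarrow> finite a"
proof -
  assume a: "a \<in> PIstar n"
  have "a \<subseteq> Pow (carrierX n)" using PI_sub[OF a] by blast
  then show "finite a" using finite_carrier by (meson finite_Pow_iff rev_finite_subset)
qed

lemma finite_lines: "a \<in> PIstar n \<Longrightarrow> finite (lines a)"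
  using PI_finite by (simp add: lines_def)

lemma star_line_info:
  assumes a: "\<alpha> \<in> PIstar n" and b: "\<beta> \<in> PIstar n" and Q: "Q \<in> lines (star n \<alpha> \<beta>)"
  shows "\<exists>u\<in>carrierX n. Q = blk n \<alpha> \<beta> u \<and> \<not> badpt \<alpha> \<beta> u \<and> (\<exists>x. Inl x \<in> Q)"
proof -
  have Qs: "Q \<in> star n \<alpha> \<beta>" and ns: "\<not>(\<exists>x. Q = {x})" using Q by (auto simp: lines_def)
  then obtain u where u: "u \<in> carrierX n" "Q = blk n \<alpha> \<beta> u" unfolding star_blk by blast
  have g: "\<not> badpt \<alpha> \<beta> u" using ns u by (auto simp: blk_def)
  have "\<exists>x. Inl x \<in> Q" using PI_line[OF star_PI[OF a b] Qs ns] by blast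
  then show ?thesis using u g by blast
qed

lemma rank_dec:
  assumes a: "\<alpha> \<in> PIstar n" and b: "\<beta> \<in> PIstar n"
    and L1: "L1 \<in> lines \<alpha>" and x0: "Inl x0 \<in> L1" and bad0: "badpt \<alpha> \<beta> (Inl x0)"
  shows "card (lines (star n \<alpha> \<beta>)) < card (lines \<alpha>)"
proof -
  define f :: "pt set \<Rightarrow> pt set" where "f Q = (SOME A. A \<in> \<alpha> \<and> (\<exists>x. Inl x \<in> Q \<and> Inl x \<in> A))" for Q
  have fQ: "f Q \<in> \<alpha> \<and> (\<exists>x. Inl x \<in> Q \<and> Inl x \<in> f Q)" if Q: "Q \<in> lines (star n \<alpha> \<beta>)" for Q
  proof -
    obtain u x where u: "u \<in> carrierX n" "Q = blk n \<alpha> \<beta> u" "Inl x \<in> Q" using star_line_info[OF a b Q] by blast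
    have "Q \<subseteq> carrierX n" using blk_sub[OF u(1)] u(2) by simp
    then have "Inl x \<in> carrierX n" using u(3) by blast
    then obtain A where "A \<in> \<alpha>" "Inl x \<in> A" using PI_block[OF a] by blast
    then have "\<exists>A. A \<in> \<alpha> \<and> (\<exists>x. Inl x \<in> Q \<and> Inl x \<in> A)" using u(3) by blast
    then show ?thesis unfolding f_def by (rule someI_ex)
  qed
  have key: "f Q \<in> lines \<alpha> - {L1}" if Q: "Q \<in> lines (star n \<alpha> \<beta>)" for Q
  proof -
    obtain u where u: "u \<in> carrierX n" "Q = blk n \<alpha> \<beta> u" "\<not> badpt \<alpha> \<beta> u" using star_line_info[OF a b Q] by blast
    obtain x where x: "Inl x \<in> Q" "Inl x \<in> f Q" and fa: "f Q \<in> \<alpha>" using fQ[OF Q] by blast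
    have ux: "(outer u, Tp x) \<in> simrel \<alpha> \<beta>"
      using x(1) u by (simp add: blk_def)
    have ns: "\<not>(\<exists>y. f Q = {y})"
    proof
      assume "\<exists>y. f Q = {y}"
      then have "f Q = {Inl x}" using x(2) by auto
      then have "{Inl x} \<in> \<alpha>" using fa by simp
      moreover have "(outer u, liftTop (Inl x)) \<in> simrel \<alpha> \<beta>" using ux by simp
      ultimately have "badpt \<alpha> \<beta> u" by (rule badI_top)
      with u(3) show False ..
    qed
    have nL: "f Q \<noteq> L1"
    proof
      assume "f Q = L1"
      then have "(Tp x, Tp x0) \<in> simrel \<alpha> \<beta>" using sim_top[OF fa x(2), of "Inl x0" \<beta>] x0 by simp
      then have "(outer u, outer (Inl x0)) \<in> simrel \<alpha> \<beta>" using sim_trans[OF ux] by simp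
      then have "(outer (Inl x0), outer u) \<in> simrel \<alpha> \<beta>" by (rule sim_sym)
      then have "badpt \<alpha> \<beta> u" using bad_inv bad0 by blast
      with u(3) show False ..
    qed
    show ?thesis using fa ns nL by (simp add: lines_def)
  qed
  have inj: "inj_on f (lines (star n \<alpha> \<beta>))"
  proof (rule inj_onI)
    fix Q Q' assume Q: "Q \<in> lines (star n \<alpha> \<beta>)" and Q': "Q' \<in> lines (star n \<alpha> \<beta>)" and e: "f Q = f Q'"
    obtain u where u: "u \<in> carrierX n" "Q = blk n \<alpha> \<beta> u" "\<not> badpt \<alpha> \<beta> u" using star_line_info[OF a b Q] by blast
    obtain x where x: "Inl x \<in> Q" "Inl x \<in> f Q" and fa: "f Q \<in> \<alpha>" using fQ[OF Q] by blast
    obtain x' where x': "Inl x' \<in> Q'" "Inl x' \<in> f Q'" using fQ[OF Q'] by blast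
    have ux: "(outer u, Tp x) \<in> simrel \<alpha> \<beta>" using x(1) u by (simp add: blk_def)
    have "(Tp x, Tp x') \<in> simrel \<alpha> \<beta>" using sim_top[OF fa x(2), of "Inl x'" \<beta>] x' e by simp
    then have "(outer u, outer (Inl x')) \<in> simrel \<alpha> \<beta>" using sim_trans[OF ux] by simp
    moreover have "Inl x' \<in> carrierX n"
    proof -
      obtain u' where "u' \<in> carrierX n" "Q' = blk n \<alpha> \<beta> u'" using star_line_info[OF a b Q'] by blast
      then show ?thesis using blk_sub x'(1) by blast
    qed
    ultimately have "Inl x' \<in> Q" using u blk_good by simp
    then have "blk n \<alpha> \<beta> (Inl x') = Q" using blk_mem u(2) by simp
    moreover have "blk n \<alpha> \<beta> (Inl x') = Q'"
    proof -
      obtain u' where "Q' = blk n \<alpha> \<beta> u'" using star_line_info[OF a b Q'] by blast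
      then show ?thesis using blk_mem x'(1) by simp
    qed
    ultimately show "Q = Q'" by simp
  qed
  have "card (lines (star n \<alpha> \<beta>)) \<le> card (lines \<alpha> - {L1})"
    by (rule card_inj_on_le[OF inj]) (use key finite_lines[OF a] in auto)
  also have "\<dots> < card (lines \<alpha>)"
  proof -
    have "card (lines \<alpha>) > 0" using L1 finite_lines[OF a] card_gt_0_iff by blast
    then show ?thesis using L1 finite_lines[OF a] by simp
  qed
  finally show ?thesis .
qed



lemma lt_img: "liftTop ` (L \<inter> range Inl \<union> {Inr k}) = {Tp x | x. Inl x \<in> L} \<union> {Md k}"
proof
  show "liftTop ` (L \<inter> range Inl \<union> {Inr k}) \<subseteq> {Tp x | x. Inl x \<in> L} \<union> {Md k}" by auto
  show "{Tp x | x. Inl x \<in> L} \<union> {Md k} \<subseteq> liftTop ` (L \<inter> range Inl \<union> {Inr k})"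
  proof
    fix y assume "y \<in> {Tp x | x. Inl x \<in> L} \<union> {Md k}"
    then consider x where "Inl x \<in> L" "y = Tp x" | "y = Md k" by blast
    then show "y \<in> liftTop ` (L \<inter> range Inl \<union> {Inr k})"
    proof cases
      case 1 then show ?thesis by (metis IntI UnI1 image_eqI liftTop.simps(1) rangeI)
    next
      case 2 then show ?thesis by (metis UnI2 image_eqI insertI1 liftTop.simps(2))
    qed
  qed
qed

lemma lb_img: "liftBot ` ({Inl k} \<union> L \<inter> range Inr) = {Md k} \<union> {Bt j | j. Inr j \<in> L}"
proof
  show "liftBot ` ({Inl k} \<union> L \<inter> range Inr) \<subseteq> {Md k} \<union> {Bt j | j. Inr j \<in> L}" by auto
  show "{Md k} \<union> {Bt j | j. Inr j \<in> L} \<subseteq> liftBot ` ({Inl k} \<union> L \<inter> range Inr)"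
  proof
    fix y assume "y \<in> {Md k} \<union> {Bt j | j. Inr j \<in> L}"
    then consider j where "Inr j \<in> L" "y = Bt j" | "y = Md k" by blast
    then show "y \<in> liftBot ` ({Inl k} \<union> L \<inter> range Inr)"
    proof cases
      case 1 then show ?thesis by (metis IntI UnI2 image_eqI liftBot.simps(2) rangeI)
    next
      case 2 then show ?thesis by (metis UnI1 image_eqI insertI1 liftBot.simps(1))
    qed
  qed
qed

lemma factor3:
  assumes a: "a \<in> PIstar n" and nos: "\<And>p. {p} \<notin> a" and nu: "a \<notin> Sn n"
  shows "\<exists>p q. p \<in> PIstar n \<and> q \<in> PIstar n \<and> star n p q = a \<and>
     (\<exists>j. {Inr j} \<in> p) \<and> (\<exists>j. {Inl j} \<in> q) \<and>
     card (lines p) \<le> card (lines a) \<and> card (lines q) \<le> card (lines a)"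
proof -
  have lineA: "(\<exists>i. Inl i \<in> L) \<and> (\<exists>j. Inr j \<in> L)" if "L \<in> a" for L
    using PI_line[OF a that] nos that by blast
  define m where "m L = (SOME x. Inl x \<in> L)" for L :: "pt set"
  have mL: "Inl (m L) \<in> L" if "L \<in> a" for L
    unfolding m_def using lineA[OF that] by (meson someI_ex)
  have mn: "m L \<in> {1..n}" if "L \<in> a" for L using PI_sub[OF a that mL[OF that]] by simp
  have minj: "L = L'" if "L \<in> a" "L' \<in> a" "m L = m L'" for L L'
    using PI_disj[OF a that(1,2) mL[OF that(1)]] mL[OF that(2)] that(3) by simp
  define M where "M = m ` a"
  have Mn: "M \<subseteq> {1..n}" using mn by (auto simp: M_def)
  have exj: "\<exists>j. j \<in> {1..n} - M"
  proof (rule ccontr)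
    assume "\<not> ?thesis"
    then have allM: "x \<in> M" if "x \<in> {1..n}" for x using that by blast
    have "a \<in> Sn n"
    proof (rule tops_lemma[OF a])
      fix x show "{Inl x} \<notin> a" using nos by blast
    next
      fix A x y assume A: "A \<in> a" "Inl x \<in> A" "Inl y \<in> A"
      have xm: "x = m A" if "Inl x \<in> A" for x
      proof -
        have "x \<in> {1..n}" using PI_sub[OF a A(1) that] by simp
        then obtain L where L: "L \<in> a" "x = m L" using allM by (auto simp: M_def)
        have "L = A" using PI_disj[OF a L(1) A(1) mL[OF L(1)]] that L(2) by simp
        then show ?thesis using L by simp
      qed
      show "x = y" using xm[OF A(2)] xm[OF A(3)] by simp
    qed
    with nu show False by simp
  qed
  then obtain j0 where j0: "j0 \<in> {1..n}" "j0 \<notin> M" by blast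
  define p where "p = (\<lambda>L. L \<inter> range Inl \<union> {Inr (m L)}) ` a \<union> (\<lambda>j. {Inr j}) ` ({1..n} - M)"
  define q where "q = (\<lambda>L. {Inl (m L)} \<union> L \<inter> range Inr) ` a \<union> (\<lambda>j. {Inl j}) ` ({1..n} - M)"
  have notM: "j \<notin> M \<Longrightarrow> L \<in> a \<Longrightarrow> j \<noteq> m L" for j L by (auto simp: M_def)
  have pPI: "p \<in> PIstar n"
  proof -
    have 1: "\<forall>A\<in>p. A \<noteq> {}" by (auto simp: p_def)
    have 2: "\<forall>A\<in>p. \<forall>B\<in>p. A \<noteq> B \<longrightarrow> A \<inter> B = {}"
    proof (intro ballI impI)
      fix A B assume A: "A \<in> p" and B: "B \<in> p" and ne: "A \<noteq> B"
      show "A \<inter> B = {}"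
      proof (rule ccontr)
        assume "A \<inter> B \<noteq> {}"
        then obtain w where w: "w \<in> A" "w \<in> B" by blast
        show False
          using A B
        proof (unfold p_def, elim UnE imageE)
          fix L L' assume L: "L \<in> a" "A = L \<inter> range Inl \<union> {Inr (m L)}" and L': "L' \<in> a" "B = L' \<inter> range Inl \<union> {Inr (m L')}"
          have "L = L'"
          proof (cases w)
            case (Inl x)
            then have "w \<in> L" "w \<in> L'" using w L L' by auto
            then show ?thesis using PI_disj[OF a L(1) L'(1)] by simp
          next
            case (Inr j)
            then have "j = m L" "j = m L'" using w L L' by auto
            then show ?thesis using minj L L' by simp
          qed
          then show False using ne L L' by simp
        next
          fix L j assume L: "L \<in> a" "A = L \<inter> range Inl \<union> {Inr (m L)}" and j: "j \<in> {1..n} - M" "B = {Inr j}"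
          then show False using w notM[of j L] by auto
        next
          fix L j assume L: "L \<in> a" "B = L \<inter> range Inl \<union> {Inr (m L)}" and j: "j \<in> {1..n} - M" "A = {Inr j}"
          then show False using w notM[of j L] by auto
        next
          fix j j' assume "A = {Inr j}" "B = {Inr j'}"
          then show False using w ne by auto
        qed
      qed
    qed
    have 3: "\<Union>p = carrierX n"
    proof
      show "\<Union>p \<subseteq> carrierX n"
      proof
        fix w assume "w \<in> \<Union>p"
        then obtain A where A: "A \<in> p" "w \<in> A" by blast
        then show "w \<in> carrierX n"
        proof (unfold p_def, elim UnE imageE)
          fix L assume L: "L \<in> a" "A = L \<inter> range Inl \<union> {Inr (m L)}"
          then show ?thesis using A(2) PI_sub[OF a L(1)] mn[OF L(1)] by auto
        next
          fix j assume "j \<in> {1..n} - M" "A = {Inr j}"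
          then show ?thesis using A(2) by auto
        qed
      qed
      show "carrierX n \<subseteq> \<Union>p"
      proof
        fix w assume "w \<in> carrierX n"
        then show "w \<in> \<Union>p"
        proof (rule carrier_cases)
          fix x assume wx: "w = Inl x" "x \<in> {1..n}"
          then obtain L where "L \<in> a" "Inl x \<in> L" using PI_block[OF a, of w] by auto
          then show ?thesis using wx unfolding p_def by blast
        next
          fix j assume wj: "w = Inr j" "j \<in> {1..n}"
          show ?thesis
          proof (cases "j \<in> M")
            case True
            then obtain L where "L \<in> a" "j = m L" by (auto simp: M_def)
            then show ?thesis using wj unfolding p_def by blast
          next
            case False then show ?thesis using wj unfolding p_def by blast
          qed
        qed
      qed
    qed
    have 4: "\<forall>A\<in>p. (\<exists>x. A = {x}) \<or> (A \<inter> range Inl \<noteq> {} \<and> A \<inter> range Inr \<noteq> {})"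
    proof
      fix A assume "A \<in> p"
      then show "(\<exists>x. A = {x}) \<or> (A \<inter> range Inl \<noteq> {} \<and> A \<inter> range Inr \<noteq> {})"
      proof (unfold p_def, elim UnE imageE)
        fix L assume L: "L \<in> a" "A = L \<inter> range Inl \<union> {Inr (m L)}"
        then show ?thesis using mL[OF L(1)] by blast
      next
        fix j assume "A = {Inr j}" then show ?thesis by blast
      qed
    qed
    show ?thesis unfolding PIstar_def is_partition_def using 1 2 3 4 by blast
  qed
  have qPI: "q \<in> PIstar n"
  proof -
    have 1: "\<forall>A\<in>q. A \<noteq> {}" by (auto simp: q_def)
    have 2: "\<forall>A\<in>q. \<forall>B\<in>q. A \<noteq> B \<longrightarrow> A \<inter> B = {}"
    proof (intro ballI impI)
      fix A B assume A: "A \<in> q" and B: "B \<in> q" and ne: "A \<noteq> B"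
      show "A \<inter> B = {}"
      proof (rule ccontr)
        assume "A \<inter> B \<noteq> {}"
        then obtain w where w: "w \<in> A" "w \<in> B" by blast
        show False
          using A B
        proof (unfold q_def, elim UnE imageE)
          fix L L' assume L: "L \<in> a" "A = {Inl (m L)} \<union> L \<inter> range Inr" and L': "L' \<in> a" "B = {Inl (m L')} \<union> L' \<inter> range Inr"
          have "L = L'"
          proof (cases w)
            case (Inr x)
            then have "w \<in> L" "w \<in> L'" using w L L' by auto
            then show ?thesis using PI_disj[OF a L(1) L'(1)] by simp
          next
            case (Inl j)
            then have "j = m L" "j = m L'" using w L L' by auto
            then show ?thesis using minj L L' by simp
          qed
          then show False using ne L L' by simp
        next
          fix L j assume L: "L \<in> a" "A = {Inl (m L)} \<union> L \<inter> range Inr" and j: "j \<in> {1..n} - M" "B = {Inl j}"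
          then show False using w notM[of j L] by auto
        next
          fix L j assume L: "L \<in> a" "B = {Inl (m L)} \<union> L \<inter> range Inr" and j: "j \<in> {1..n} - M" "A = {Inl j}"
          then show False using w notM[of j L] by auto
        next
          fix j j' assume "A = {Inl j}" "B = {Inl j'}"
          then show False using w ne by auto
        qed
      qed
    qed
    have 3: "\<Union>q = carrierX n"
    proof
      show "\<Union>q \<subseteq> carrierX n"
      proof
        fix w assume "w \<in> \<Union>q"
        then obtain A where A: "A \<in> q" "w \<in> A" by blast
        then show "w \<in> carrierX n"
        proof (unfold q_def, elim UnE imageE)
          fix L assume L: "L \<in> a" "A = {Inl (m L)} \<union> L \<inter> range Inr"
          then show ?thesis using A(2) PI_sub[OF a L(1)] mn[OF L(1)] by auto
        next
          fix j assume "j \<in> {1..n} - M" "A = {Inl j}"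
          then show ?thesis using A(2) by auto
        qed
      qed
      show "carrierX n \<subseteq> \<Union>q"
      proof
        fix w assume "w \<in> carrierX n"
        then show "w \<in> \<Union>q"
        proof (rule carrier_cases)
          fix x assume wx: "w = Inr x" "x \<in> {1..n}"
          then obtain L where "L \<in> a" "Inr x \<in> L" using PI_block[OF a, of w] by auto
          then show ?thesis using wx unfolding q_def by blast
        next
          fix j assume wj: "w = Inl j" "j \<in> {1..n}"
          show ?thesis
          proof (cases "j \<in> M")
            case True
            then obtain L where "L \<in> a" "j = m L" by (auto simp: M_def)
            then show ?thesis using wj unfolding q_def by blast
          next
            case False then show ?thesis using wj unfolding q_def by blast
          qed
        qed
      qed
    qed
    have 4: "\<forall>A\<in>q. (\<exists>x. A = {x}) \<or> (A \<inter> range Inl \<noteq> {} \<and> A \<inter> range Inr \<noteq> {})"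
    proof
      fix A assume "A \<in> q"
      then show "(\<exists>x. A = {x}) \<or> (A \<inter> range Inl \<noteq> {} \<and> A \<inter> range Inr \<noteq> {})"
      proof (unfold q_def, elim UnE imageE)
        fix L assume L: "L \<in> a" "A = {Inl (m L)} \<union> L \<inter> range Inr"
        then show ?thesis using lineA[OF L(1)] by blast
      next
        fix j assume "A = {Inl j}" then show ?thesis by blast
      qed
    qed
    show ?thesis unfolding PIstar_def is_partition_def using 1 2 3 4 by blast
  qed
  have abp: "liftTop ` (L \<inter> range Inl \<union> {Inr (m L)}) \<in> allBlocks p q" if "L \<in> a" for L
    using that unfolding allBlocks_def p_def by blast
  have abq: "liftBot ` ({Inl (m L)} \<union> L \<inter> range Inr) \<in> allBlocks p q" if "L \<in> a" for L
    using that unfolding allBlocks_def q_def by blast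
  have ab_cases: "(\<exists>L'\<in>a. A' = {Tp x | x. Inl x \<in> L'} \<union> {Md (m L')}) \<or>
      (\<exists>L'\<in>a. A' = {Md (m L')} \<union> {Bt j | j. Inr j \<in> L'}) \<or> (\<exists>j. j \<notin> M \<and> A' = {Md j})"
    if "A' \<in> allBlocks p q" for A'
  proof -
    from that consider B where "B \<in> p" "A' = liftTop ` B" | B where "B \<in> q" "A' = liftBot ` B"
      unfolding allBlocks_def by blast
    then show ?thesis
    proof cases
      case 1
      from 1(1) show ?thesis unfolding p_def
      proof (elim UnE imageE)
        fix L assume "L \<in> a" "B = L \<inter> range Inl \<union> {Inr (m L)}"
        then show ?thesis using 1(2) lt_img[of L "m L"] by blast
      next
        fix j assume "j \<in> {1..n} - M" "B = {Inr j}"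
        then show ?thesis using 1(2) by auto
      qed
    next
      case 2
      from 2(1) show ?thesis unfolding q_def
      proof (elim UnE imageE)
        fix L assume "L \<in> a" "B = {Inl (m L)} \<union> L \<inter> range Inr"
        then show ?thesis using 2(2) lb_img[of "m L" L] by blast
      next
        fix j assume "j \<in> {1..n} - M" "B = {Inl j}"
        then show ?thesis using 2(2) by auto
      qed
    qed
  qed
  have psing: "\<exists>j. j \<notin> M \<and> p' = Inr j" if "{p'} \<in> p" for p'
    using that unfolding p_def
  proof (elim UnE imageE)
    fix L assume L: "L \<in> a" "{p'} = L \<inter> range Inl \<union> {Inr (m L)}"
    then have "Inl (m L) \<in> {p'}" "Inr (m L) \<in> {p'}" using mL[OF L(1)] by auto
    then have False by (metis Inl_Inr_False singletonD)
    then show ?thesis ..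
  next
    fix j assume "j \<in> {1..n} - M" "{p'} = {Inr j}" then show ?thesis by auto
  qed
  have qsing: "\<exists>j. j \<notin> M \<and> p' = Inl j" if "{p'} \<in> q" for p'
    using that unfolding q_def
  proof (elim UnE imageE)
    fix L assume L: "L \<in> a" "{p'} = {Inl (m L)} \<union> L \<inter> range Inr"
    obtain j where "Inr j \<in> L" using lineA[OF L(1)] by blast
    then have "Inl (m L) \<in> {p'}" "Inr j \<in> {p'}" using L by auto
    then have False by (metis Inl_Inr_False singletonD)
    then show ?thesis ..
  next
    fix j assume "j \<in> {1..n} - M" "{p'} = {Inl j}" then show ?thesis by auto
  qed
  have blkL: "blk n p q u = L" if L: "L \<in> a" and uL: "u \<in> L" for L u
  proof -
    define C where "C = {Tp x | x. Inl x \<in> L} \<union> {Md (m L)} \<union> {Bt j | j. Inr j \<in> L}"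
    have cl: "A' \<subseteq> C" if A': "A' \<in> allBlocks p q" and mt: "A' \<inter> C \<noteq> {}" for A'
    proof -
      from ab_cases[OF A'] consider L' where "L' \<in> a" "A' = {Tp x | x. Inl x \<in> L'} \<union> {Md (m L')}"
        | L' where "L' \<in> a" "A' = {Md (m L')} \<union> {Bt j | j. Inr j \<in> L'}" | j where "j \<notin> M" "A' = {Md j}"
        by blast
      then show ?thesis
      proof cases
        case 1
        have "L' = L"
        proof -
          from mt 1 obtain c where "c \<in> A'" "c \<in> C" by blast
          then consider x where "Inl x \<in> L'" "Inl x \<in> L" | "m L' = m L" using 1 unfolding C_def by auto
          then show ?thesis
          proof cases
            case 1 then show ?thesis using PI_disj[OF a \<open>L' \<in> a\<close> L] by simp
          next
            case 2 then show ?thesis using minj \<open>L' \<in> a\<close> L by simp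
          qed
        qed
        then show ?thesis using 1 unfolding C_def by auto
      next
        case 2
        have "L' = L"
        proof -
          from mt 2 obtain c where "c \<in> A'" "c \<in> C" by blast
          then consider j where "Inr j \<in> L'" "Inr j \<in> L" | "m L' = m L" using 2 unfolding C_def by auto
          then show ?thesis
          proof cases
            case 1 then show ?thesis using PI_disj[OF a \<open>L' \<in> a\<close> L] by simp
          next
            case 2 then show ?thesis using minj \<open>L' \<in> a\<close> L by simp
          qed
        qed
        then show ?thesis using 2 unfolding C_def by auto
      next
        case 3
        then have "j = m L" using mt unfolding C_def by auto
        then show ?thesis using 3 L by (auto simp: M_def)
      qed
    qed
    have hub: "(Md (m L), c) \<in> simrel p q" if "c \<in> C" for c
    proof -
      from that consider x where "Inl x \<in> L" "c = Tp x" | "c = Md (m L)" | j where "Inr j \<in> L" "c = Bt j"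
        unfolding C_def by blast
      then show ?thesis
      proof cases
        case 1
        have "c \<in> liftTop ` (L \<inter> range Inl \<union> {Inr (m L)})" "Md (m L) \<in> liftTop ` (L \<inter> range Inl \<union> {Inr (m L)})"
          using 1 lt_img[of L "m L"] by blast+
        then show ?thesis using sim_edge[OF abp[OF L]] by blast
      next
        case 2 then show ?thesis by simp
      next
        case 3
        have "c \<in> liftBot ` ({Inl (m L)} \<union> L \<inter> range Inr)" "Md (m L) \<in> liftBot ` ({Inl (m L)} \<union> L \<inter> range Inr)"
          using 3 lb_img[of "m L" L] by blast+
        then show ?thesis using sim_edge[OF abq[OF L]] by blast
      qed
    qed
    have uc: "u \<in> carrierX n" using PI_sub[OF a L uL] .
    have uC: "outer u \<in> C" using uc uL by (cases u) (auto simp: C_def)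
    have uh: "(outer u, Md (m L)) \<in> simrel p q" using hub[OF uC] by (rule sim_sym)
    have iff: "(outer u, c) \<in> simrel p q \<longleftrightarrow> c \<in> C" for c
      by (rule sim_iff[OF cl uC]) (auto intro: sim_trans[OF uh] hub)
    have nb: "\<not> badpt p q u"
    proof
      assume "badpt p q u"
      then show False
      proof (cases rule: badE)
        case (1 p')
        then obtain j where j: "j \<notin> M" "p' = Inr j" using psing by blast
        then have "Md j \<in> C" using 1 iff by simp
        then have "j = m L" unfolding C_def by auto
        then show False using j L by (auto simp: M_def)
      next
        case (2 p')
        then obtain j where j: "j \<notin> M" "p' = Inl j" using qsing by blast
        then have "Md j \<in> C" using 2 iff by simp
        then have "j = m L" unfolding C_def by auto
        then show False using j L by (auto simp: M_def)
      qed
    qed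
    have "blk n p q u = {v \<in> carrierX n. outer v \<in> C}" using nb iff by (simp add: blk_def)
    also have "\<dots> = L"
    proof
      show "{v \<in> carrierX n. outer v \<in> C} \<subseteq> L"
      proof
        fix v assume "v \<in> {v \<in> carrierX n. outer v \<in> C}"
        then show "v \<in> L" by (cases v) (auto simp: C_def)
      qed
      show "L \<subseteq> {v \<in> carrierX n. outer v \<in> C}"
      proof
        fix v assume v: "v \<in> L"
        then show "v \<in> {v \<in> carrierX n. outer v \<in> C}" using PI_sub[OF a L v] by (cases v) (auto simp: C_def)
      qed
    qed
    finally show ?thesis .
  qed
  have prod: "star n p q = a"
  proof
    show "star n p q \<subseteq> a"
    proof
      fix B assume "B \<in> star n p q"
      then obtain u where u: "u \<in> carrierX n" "B = blk n p q u" unfolding star_blk by blast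
      obtain L where "L \<in> a" "u \<in> L" using PI_block[OF a u(1)] by blast
      then show "B \<in> a" using blkL u by simp
    qed
    show "a \<subseteq> star n p q"
    proof
      fix L assume L: "L \<in> a"
      obtain u where u: "u \<in> L" using PI_ne[OF a L] by blast
      have "u \<in> carrierX n" using PI_sub[OF a L u] .
      then show "L \<in> star n p q" using blkL[OF L u] unfolding star_blk by force
    qed
  qed
  have sp: "{Inr j0} \<in> p" using j0 unfolding p_def by blast
  have sq: "{Inl j0} \<in> q" using j0 unfolding q_def by blast
  have la: "lines a = a" using nos by (auto simp: lines_def)
  have fa: "finite a" using PI_finite[OF a] .
  have cp: "card (lines p) \<le> card (lines a)"
  proof -
    have "lines p \<subseteq> (\<lambda>L. L \<inter> range Inl \<union> {Inr (m L)}) ` a" unfolding lines_def p_def by auto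
    then have "card (lines p) \<le> card ((\<lambda>L. L \<inter> range Inl \<union> {Inr (m L)}) ` a)"
      using fa by (intro card_mono) auto
    also have "\<dots> \<le> card a" using card_image_le[OF fa] .
    finally show ?thesis using la by simp
  qed
  have cq: "card (lines q) \<le> card (lines a)"
  proof -
    have "lines q \<subseteq> (\<lambda>L. {Inl (m L)} \<union> L \<inter> range Inr) ` a" unfolding lines_def q_def by auto
    then have "card (lines q) \<le> card ((\<lambda>L. {Inl (m L)} \<union> L \<inter> range Inr) ` a)"
      using fa by (intro card_mono) auto
    also have "\<dots> \<le> card a" using card_image_le[OF fa] .
    finally show ?thesis using la by simp
  qed
  show ?thesis using pPI qPI prod sp sq cp cq by blast
qed



lemma nolines_zz:
  assumes a: "a \<in> PIstar n" and nl: "lines a = {}"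
  shows "a = zz n"
proof
  show "a \<subseteq> zz n"
  proof
    fix B assume B: "B \<in> a"
    then obtain x where "B = {x}" using nl by (auto simp: lines_def)
    then show "B \<in> zz n" using PI_sub[OF a B] by (auto simp: zz_def)
  qed
  show "zz n \<subseteq> a"
  proof
    fix B assume "B \<in> zz n"
    then obtain p where p: "p \<in> carrierX n" "B = {p}" by (auto simp: zz_def)
    obtain A where A: "A \<in> a" "p \<in> A" using PI_block[OF a p(1)] by blast
    then obtain x where "A = {x}" using nl by (auto simp: lines_def)
    then show "B \<in> a" using A p by simp
  qed
qed

lemma units_same:
  assumes cZ: "\<And>a b. a \<in> Z \<Longrightarrow> b \<in> Z \<Longrightarrow> star n a b \<in> Z"
    and cZ': "\<And>a b. a \<in> Z' \<Longrightarrow> b \<in> Z' \<Longrightarrow> star n a b \<in> Z'"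
    and part: "Z \<union> Z' = PIstar n" "Z \<inter> Z' = {}"
    and e: "Pm n id \<in> Z"
    and pi: "bij_betw \<pi> {1..n} {1..n}"
  shows "Pm n \<pi> \<in> Z"
proof -
  define \<pi>' where "\<pi>' x = (if x \<in> {1..n} then \<pi> x else x)" for x
  have eq: "Pm n \<pi> = Pm n \<pi>'" unfolding Pm_def \<pi>'_def by (intro image_cong) auto
  have "bij_betw \<pi>' {1..n} {1..n} = bij_betw \<pi> {1..n} {1..n}"
    by (rule bij_betw_cong) (simp add: \<pi>'_def)
  then have bij': "bij_betw \<pi>' {1..n} {1..n}" using pi by simp
  have perm: "\<pi>' permutes {1..n}" by (rule bij_imp_permutes[OF bij']) (auto simp: \<pi>'_def)
  have "Pm n \<pi>' \<in> Z"
    using perm finite_atLeastAtMost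
  proof (induction rule: permutes_induct)
    case id then show ?case using e by (simp add: id_def)
  next
    case (swap a b p)
    let ?t = "Transposition.transpose a b"
    have tb: "bij_betw ?t {1..n} {1..n}" using transp_bij swap by blast
    have pb: "bij_betw p {1..n} {1..n}" using permutes_imp_bij[OF \<open>p permutes {1..n}\<close>] .
    have tt: "star n (Pm n ?t) (Pm n ?t) = Pm n id"
      using Pm_comp[OF tb tb] by simp
    have tZ: "Pm n ?t \<in> Z"
    proof (rule ccontr)
      assume "Pm n ?t \<notin> Z"
      then have "Pm n ?t \<in> Z'" using part Pm_PI[OF tb] by blast
      then have "Pm n id \<in> Z'" using cZ' tt by metis
      then show False using e part by blast
    qed
    have "Pm n (?t \<circ> p) = star n (Pm n p) (Pm n ?t)" using Pm_comp[OF pb tb] by simp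
    then show ?case using cZ[OF \<open>Pm n p \<in> Z\<close> tZ] by (simp add: comp_def)
  qed
  then show ?thesis using eq by simp
qed

lemma relabel_closed:
  assumes cX: "\<And>a b. a \<in> X \<Longrightarrow> b \<in> X \<Longrightarrow> star n a b \<in> X"
    and cY: "\<And>a b. a \<in> Y \<Longrightarrow> b \<in> Y \<Longrightarrow> star n a b \<in> Y"
    and part: "X \<union> Y = PIstar n" "X \<inter> Y = {}"
    and units: "(\<forall>\<pi>. bij_betw \<pi> {1..n} {1..n} \<longrightarrow> Pm n \<pi> \<in> X) \<or> (\<forall>\<pi>. bij_betw \<pi> {1..n} {1..n} \<longrightarrow> Pm n \<pi> \<in> Y)"
    and aY: "a \<in> Y" and ij: "i \<in> {1..n}" "j \<in> {1..n}"
  shows "Rl n (Transposition.transpose i j) a \<in> Y"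
proof (rule ccontr)
  let ?t = "Transposition.transpose i j"
  assume nY: "Rl n ?t a \<notin> Y"
  have tb: "bij_betw ?t {1..n} {1..n}" using transp_bij ij by blast
  have aP: "a \<in> PIstar n" using aY part by blast
  have r: "star n (Pm n ?t) a = Rl n ?t a" using relabel[OF tb aP] .
  have bX: "Rl n ?t a \<in> X" using nY Rl_PI[OF tb aP] part by blast
  from units show False
  proof
    assume "\<forall>\<pi>. bij_betw \<pi> {1..n} {1..n} \<longrightarrow> Pm n \<pi> \<in> X"
    then have tX: "Pm n ?t \<in> X" using tb by blast
    have "star n (Pm n ?t) (Rl n ?t a) = Rl n ?t (Rl n ?t a)" using relabel[OF tb Rl_PI[OF tb aP]] .
    also have "\<dots> = a" using Rl_invol[OF ij aP] .
    finally have "a \<in> X" using cX[OF tX bX] by simp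
    then show False using aY part by blast
  next
    assume "\<forall>\<pi>. bij_betw \<pi> {1..n} {1..n} \<longrightarrow> Pm n \<pi> \<in> Y"
    then have tY: "Pm n ?t \<in> Y" using tb by blast
    have "Rl n ?t a \<in> Y" using cY[OF tY aY] r by simp
    then show False using nY by simp
  qed
qed



lemma nonunits_X:
  assumes cX: "\<And>a b. a \<in> X \<Longrightarrow> b \<in> X \<Longrightarrow> star n a b \<in> X"
    and cY: "\<And>a b. a \<in> Y \<Longrightarrow> b \<in> Y \<Longrightarrow> star n a b \<in> Y"
    and part: "X \<union> Y = PIstar n" "X \<inter> Y = {}"
    and z: "zz n \<in> X"
    and rl: "\<And>a i j. a \<in> Y \<Longrightarrow> i \<in> {1..n} \<Longrightarrow> j \<in> {1..n} \<Longrightarrow> Rl n (Transposition.transpose i j) a \<in> Y"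
  shows "a \<in> PIstar n \<Longrightarrow> a \<notin> Sn n \<Longrightarrow> a \<in> X"
proof (induction "card (lines a)" arbitrary: a rule: less_induct)
  case less
  define k where "k = card (lines a)"
  have IH: "\<And>b. b \<in> PIstar n \<Longrightarrow> b \<notin> Sn n \<Longrightarrow> card (lines b) < k \<Longrightarrow> b \<in> X"
    using less.hyps k_def by blast
  have S: "b \<in> X" if b: "b \<in> PIstar n" and bn: "b \<notin> Sn n" and bk: "card (lines b) \<le> k"
    and bs: "\<exists>p. {p} \<in> b" for b
  proof (rule ccontr)
    assume "b \<notin> X"
    then have bY: "b \<in> Y" using b part by blast
    have finish: "False" if c: "c \<in> Y" and L1: "L1 \<in> lines b" and x0: "Inl x0 \<in> L1"
      and bad: "badpt b c (Inl x0)" for c L1 x0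
    proof -
      have cP: "c \<in> PIstar n" using c part by blast
      have "card (lines (star n b c)) < card (lines b)" by (rule rank_dec[OF b cP L1 x0 bad])
      then have lt: "card (lines (star n b c)) < k" using bk by simp
      have sP: "star n b c \<in> PIstar n" using star_PI[OF b cP] .
      have sn: "star n b c \<notin> Sn n" using K_lemma[OF b cP] bn by blast
      have "star n b c \<in> X" using IH[OF sP sn lt] .
      moreover have "star n b c \<in> Y" using cY[OF bY c] .
      ultimately show False using part by blast
    qed
    show False
    proof (cases "lines b = {}")
      case True
      then have "b = zz n" using nolines_zz[OF b] by simp
      then show False using z \<open>b \<notin> X\<close> by simp
    next
      case False
      then obtain L1 where L1: "L1 \<in> lines b" by blast
      have L1b: "L1 \<in> b" and L1ns: "\<not>(\<exists>x. L1 = {x})" using L1 by (auto simp: lines_def)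
      obtain x0 j0 where x0: "Inl x0 \<in> L1" and j0: "Inr j0 \<in> L1" using PI_line[OF b L1b L1ns] by blast
      have j0n: "j0 \<in> {1..n}" using PI_sub[OF b L1b j0] by simp
      have s1: "(Tp x0, Md j0) \<in> simrel b c" for c using sim_top[OF L1b x0 j0] by simp
      show False
      proof (cases "\<exists>t. {Inl t} \<in> b")
        case True
        then obtain t where t: "{Inl t} \<in> b" by blast
        have tn: "t \<in> {1..n}" using PI_sub[OF b t] by simp
        let ?t = "Transposition.transpose j0 t"
        define c where "c = Rl n ?t b"
        have cY': "c \<in> Y" unfolding c_def using rl[OF bY j0n tn] .
        have "{p \<in> carrierX n. gmap ?t p \<in> {Inl t}} = {Inl j0}"
        proof
          show "{p \<in> carrierX n. gmap ?t p \<in> {Inl t}} \<subseteq> {Inl j0}"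
          proof
            fix p assume p: "p \<in> {p \<in> carrierX n. gmap ?t p \<in> {Inl t}}"
            then show "p \<in> {Inl j0}"
              by (cases p) (auto simp: transpose_eq_iff)
          qed
          show "{Inl j0} \<subseteq> {p \<in> carrierX n. gmap ?t p \<in> {Inl t}}" using j0n by simp
        qed
        moreover have "{p \<in> carrierX n. gmap ?t p \<in> {Inl t}} \<in> Rl n ?t b"
          unfolding Rl_def using t by (rule imageI)
        ultimately have "{Inl j0} \<in> c" unfolding c_def by simp
        moreover have "(outer (Inl x0), liftBot (Inl j0)) \<in> simrel b c" using s1 by simp
        ultimately have "badpt b c (Inl x0)" by (rule badI_bot)
        then show False using finish[OF cY' L1 x0] by blast
      next
        case nt: False
        obtain s where s: "{s} \<in> b" using bs by blast
        then obtain s' where ss: "s = Inr s'" using nt by (cases s) auto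
        have sn: "s' \<in> {1..n}" using PI_sub[OF b s] ss by simp
        have sj: "s' \<noteq> j0"
        proof
          assume "s' = j0"
          then have "L1 = {s}" using PI_disj[OF b L1b s j0] ss by simp
          then show False using L1ns by blast
        qed
        obtain A x1 x2 where A: "A \<in> b" "Inl x1 \<in> A" "Inl x2 \<in> A" "x1 \<noteq> x2"
        proof -
          have "\<not> (\<forall>A x y. A \<in> b \<longrightarrow> Inl x \<in> A \<longrightarrow> Inl y \<in> A \<longrightarrow> x = y)"
          proof
            assume h: "\<forall>A x y. A \<in> b \<longrightarrow> Inl x \<in> A \<longrightarrow> Inl y \<in> A \<longrightarrow> x = y"
            have "b \<in> Sn n"
            proof (rule tops_lemma[OF b])
              fix x show "{Inl x} \<notin> b" using nt by blast
            next
              fix A x y assume "A \<in> b" "Inl x \<in> A" "Inl y \<in> A"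
              then show "x = y" using h by blast
            qed
            with bn show False by simp
          qed
          then show ?thesis using that by blast
        qed
        have x1n: "x1 \<in> {1..n}" and x2n: "x2 \<in> {1..n}" using PI_sub[OF b A(1) A(2)] PI_sub[OF b A(1) A(3)] by simp_all
        let ?\<sigma> = "Transposition.transpose j0 x1"
        define s'' where "s'' = ?\<sigma> s'"
        let ?\<pi> = "Transposition.transpose s'' x2"
        have s''n: "s'' \<in> {1..n}" using sn j0n x1n unfolding s''_def Transposition.transpose_def by simp
        have s''x1: "s'' \<noteq> x1" unfolding s''_def using sj
          by (auto simp: transpose_eq_iff)
        define c1 where "c1 = Rl n ?\<pi> b"
        define c where "c = Rl n ?\<sigma> c1"
        have c1Y: "c1 \<in> Y" unfolding c1_def using rl[OF bY s''n x2n] .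
        have cY': "c \<in> Y" unfolding c_def using rl[OF c1Y j0n x1n] .
        define B where "B = {p \<in> carrierX n. gmap ?\<sigma> p \<in> {q \<in> carrierX n. gmap ?\<pi> q \<in> A}}"
        have Bc: "B \<in> c" unfolding B_def c_def c1_def Rl_def using A(1) by blast
        have "?\<pi> x1 = x1" using s''x1 A(4) by (simp add: Transposition.transpose_def)
        then have j0B: "Inl j0 \<in> B" unfolding B_def using j0n x1n A(2) by simp
        have sB: "Inl s' \<in> B" unfolding B_def using sn s''n A(3) s''_def by simp
        have "(Md j0, Md s') \<in> simrel b c" using sim_bot[OF Bc j0B sB] by simp
        then have "(outer (Inl x0), liftTop (Inr s')) \<in> simrel b c" using sim_trans[OF s1] by simp
        then have "badpt b c (Inl x0)" using badI_top[of "Inr s'" b] s ss by simp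
        then show False using finish[OF cY' L1 x0] by blast
      qed
    qed
  qed
  show ?case
  proof (cases "\<exists>p. {p} \<in> a")
    case True then show ?thesis using S[OF less.prems] k_def by simp
  next
    case False
    then have nos: "\<And>p. {p} \<notin> a" by blast
    obtain p q where pq: "p \<in> PIstar n" "q \<in> PIstar n" "star n p q = a" "\<exists>j. {Inr j} \<in> p" "\<exists>j. {Inl j} \<in> q"
      "card (lines p) \<le> card (lines a)" "card (lines q) \<le> card (lines a)"
      using factor3[OF less.prems(1) nos less.prems(2)] by blast
    have "p \<notin> Sn n" using pq(4) Sn_nosing by blast
    then have pX: "p \<in> X" using S[OF pq(1)] pq(4,6) k_def by blast
    have "q \<notin> Sn n" using pq(5) Sn_nosing by blast
    then have qX: "q \<in> X" using S[OF pq(2)] pq(5,7) k_def by blast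
    show ?thesis using cX[OF pX qX] pq(3) by simp
  qed
qed



lemma ci_PI: "n \<ge> 1 \<Longrightarrow> completely_isolated (PIstar n) (star n) (PIstar n)"
  unfolding completely_isolated_def using zz_PI star_PI by blast

lemma e_Sn: "Pm n id \<in> Sn n"
  by (rule Pm_Sn) simp

lemma ci_Sn: "completely_isolated (PIstar n) (star n) (Sn n)"
  unfolding completely_isolated_def
  using e_Sn Sn_PI Sn_closed K_lemma by blast

lemma ci_nonunits: "n \<ge> 1 \<Longrightarrow> completely_isolated (PIstar n) (star n) (PIstar n - Sn n)"
proof -
  assume n: "n \<ge> 1"
  have 1: "PIstar n - Sn n \<noteq> {}" using zz_PI zz_notSn[OF n] by blast
  have 2: "\<forall>a\<in>PIstar n - Sn n. \<forall>b\<in>PIstar n - Sn n. star n a b \<in> PIstar n - Sn n"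
    using star_PI K_lemma by blast
  have 3: "\<forall>a\<in>PIstar n. \<forall>b\<in>PIstar n. star n a b \<in> PIstar n - Sn n \<longrightarrow> a \<in> PIstar n - Sn n \<or> b \<in> PIstar n - Sn n"
    using Sn_closed by blast
  show ?thesis unfolding completely_isolated_def using 1 2 3 by blast
qed

lemma ci_classify:
  assumes n: "n \<ge> 1" and T: "completely_isolated (PIstar n) (star n) T"
  shows "T = PIstar n \<or> T = Sn n \<or> T = PIstar n - Sn n"
proof -
  have Tne: "T \<noteq> {}" and TP: "T \<subseteq> PIstar n" and cT: "\<And>a b. a \<in> T \<Longrightarrow> b \<in> T \<Longrightarrow> star n a b \<in> T"
    and pr: "\<And>a b. a \<in> PIstar n \<Longrightarrow> b \<in> PIstar n \<Longrightarrow> star n a b \<in> T \<Longrightarrow> a \<in> T \<or> b \<in> T"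
    using T unfolding completely_isolated_def by blast+
  define U where "U = PIstar n - T"
  show ?thesis
  proof (cases "U = {}")
    case True then show ?thesis using TP U_def by blast
  next
    case Une: False
    have cU: "star n a b \<in> U" if "a \<in> U" "b \<in> U" for a b
      using that pr star_PI unfolding U_def by blast
    have part1: "T \<union> U = PIstar n" "T \<inter> U = {}" using TP unfolding U_def by blast+
    have part2: "U \<union> T = PIstar n" "U \<inter> T = {}" using TP unfolding U_def by blast+
    have ePI: "Pm n id \<in> PIstar n" using Sn_PI[OF e_Sn] .
    have units: "(\<forall>\<pi>. bij_betw \<pi> {1..n} {1..n} \<longrightarrow> Pm n \<pi> \<in> T) \<or> (\<forall>\<pi>. bij_betw \<pi> {1..n} {1..n} \<longrightarrow> Pm n \<pi> \<in> U)"
    proof (cases "Pm n id \<in> T")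
      case True then show ?thesis using units_same[OF cT cU part1 True] by blast
    next
      case False then have "Pm n id \<in> U" using ePI U_def by blast
      then show ?thesis using units_same[OF cU cT part2] by blast
    qed
    have units': "(\<forall>\<pi>. bij_betw \<pi> {1..n} {1..n} \<longrightarrow> Pm n \<pi> \<in> U) \<or> (\<forall>\<pi>. bij_betw \<pi> {1..n} {1..n} \<longrightarrow> Pm n \<pi> \<in> T)"
      using units by blast
    have idb: "bij_betw id {1..n} {1..n}" by simp
    have SnE: "\<And>a. a \<in> Sn n \<Longrightarrow> \<exists>\<pi>. bij_betw \<pi> {1..n} {1..n} \<and> a = Pm n \<pi>" by (auto simp: Sn_Pm)
    show ?thesis
    proof (cases "zz n \<in> T")
      case zT: True
      have nonT: "a \<in> T" if "a \<in> PIstar n" "a \<notin> Sn n" for a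
        using nonunits_X[OF cT cU part1 zT relabel_closed[OF cT cU part1 units]] that by blast
      show ?thesis
      proof (cases "Pm n id \<in> T")
        case True
        then have "\<forall>\<pi>. bij_betw \<pi> {1..n} {1..n} \<longrightarrow> Pm n \<pi> \<in> T" using units part1 idb by blast
        then have "Sn n \<subseteq> T" using SnE by blast
        then have "PIstar n \<subseteq> T" using nonT by blast
        then show ?thesis using Une U_def by blast
      next
        case False
        then have "\<forall>\<pi>. bij_betw \<pi> {1..n} {1..n} \<longrightarrow> Pm n \<pi> \<in> U" using units idb by blast
        then have "Sn n \<subseteq> U" using SnE by blast
        then have "T = PIstar n - Sn n" using nonT TP part1 by blast
        then show ?thesis by blast
      qed
    next
      case zU: False
      then have zU: "zz n \<in> U" using zz_PI U_def by blast
      have nonU: "a \<in> U" if "a \<in> PIstar n" "a \<notin> Sn n" for a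
        using nonunits_X[OF cU cT part2 zU relabel_closed[OF cU cT part2 units']] that by blast
      show ?thesis
      proof (cases "Pm n id \<in> T")
        case True
        then have "\<forall>\<pi>. bij_betw \<pi> {1..n} {1..n} \<longrightarrow> Pm n \<pi> \<in> T" using units part1 idb by blast
        then have "Sn n \<subseteq> T" using SnE by blast
        then have "T = Sn n" using nonU TP part1 by blast
        then show ?thesis by blast
      next
        case False
        then have "\<forall>\<pi>. bij_betw \<pi> {1..n} {1..n} \<longrightarrow> Pm n \<pi> \<in> U" using units idb by blast
        then have "Sn n \<subseteq> U" using SnE by blast
        then have "PIstar n \<subseteq> U" using nonU by blast
        then show ?thesis using Tne TP U_def by blast
      qed
    qed
  qed
qed

theorem mainTheorem9:
  fixes n :: nat
  assumes "n \<ge> 2"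
  shows "{U. completely_isolated (PIstar n) (star n) U} = {PIstar n, Sn n, PIstar n - Sn n}"
proof -
  have n: "n \<ge> 1" using assms by simp
  show ?thesis using ci_classify[OF n] ci_PI[OF n] ci_Sn ci_nonunits[OF n] by blast
qed


end
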